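(* Let $P$ be a minuscule poset, i.e., a finite poset each of whose connected components is isomorphic to one of: (a) $\mathbf{a}\times\mathbf{b}$ for $a,b\ge1$; (b) the interval $[\varnothing,(b,b)]$ of Young's lattice for $b\ge1$; (c) $P_{a,1,1,a}$ for $a\ge1$; (d) $P(E_6)$ or $P(E_7)$. Then the minuscule lattice $J(P)$ is tCDE.
   Context: $\mathbf{a}$ is the chain with $a$ elements; $\times$ is the direct product. Young's lattice is the set of partitions ordered by $\nu\subseteq\lambda$ iff $\nu_i\le\lambda_i$ for all $i$. $P_{a,1,1,a}$ is the poset on $w_1,\ldots,w_a,x_1,y_1,z_1,\ldots,z_a$ with cover relations $w_1\lessdot\cdots\lessdot w_a$, $w_a\lessdot x_1$, $w_a\lessdot y_1$, $x_1\lessdot z_1$, $y_1\lessdot z_1$, $z_1\lessdot\cdots\lessdot z_a$. $P^{\mathrm{shift}}_{\delta_4}$ is the set of boxes $[i,j]$ with $1\le i\le j\le4$, ordered by $[i,j]\le[i',j']$ iff $i\le i'$, $j\le j'$; $P(E_6):=J(P^{\mathrm{shift}}_{\delta_4})$ (16 elements) and $P(E_7):=J(P(E_6))$ (27 elements). (These are the connected minuscule posets arising from minuscule representations of semisimple Lie algebras.) $J(Q)$ is the lattice of order ideals of $Q$ under inclusion; $\mathrm{ddeg}$ is the number of covered elements; $\mathrm{uni}$ is uniform. $\mathcal{T}^+_p(I)=1$ iff $p\notin I$ and $p$ minimal in $P\setminus I$; $\mathcal{T}^-_p(I)=1$ iff $p\in I$ and $p$ maximal in $I$. $\mu$ is toggle-symmetric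 if $\mathbb{E}(\mu;\mathcal{T}^+_p)=\mathbb{E}(\mu;\mathcal{T}^-_p)$ for all $p$; $J(P)$ is tCDE if $\mathbb{E}(\mu;\mathrm{ddeg})=\mathbb{E}(\mathrm{uni}_{J(P)};\mathrm{ddeg})$ for every toggle-symmetric $\mu$ on $J(P)$. *)

theory Defs
  imports Complex_Main
begin

definition is_poset :: "'a set \<Rightarrow> ('a \<Rightarrow> 'a \<Rightarrow> bool) \<Rightarrow> bool" where
  "is_poset P le \<longleftrightarrow> (\<forall>x\<in>P. le x x) \<and>
     (\<forall>x\<in>P. \<forall>y\<in>P. le x y \<and> le y x \<longrightarrow> x = y) \<and>
     (\<forall>x\<in>P. \<forall>y\<in>P. \<forall>z\<in>P. le x y \<and> le y z \<longrightarrow> le x z)"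

definition order_iso :: "'a set \<Rightarrow> ('a \<Rightarrow> 'a \<Rightarrow> bool) \<Rightarrow> 'b set \<Rightarrow> ('b \<Rightarrow> 'b \<Rightarrow> bool) \<Rightarrow> ('a \<Rightarrow> 'b) \<Rightarrow> bool" where
  "order_iso P le Q le' f \<longleftrightarrow> bij_betw f P Q \<and> (\<forall>x\<in>P. \<forall>y\<in>P. le x y \<longleftrightarrow> le' (f x) (f y))"

definition poset_isomorphic :: "'a set \<Rightarrow> ('a \<Rightarrow> 'a \<Rightarrow> bool) \<Rightarrow> 'b set \<Rightarrow> ('b \<Rightarrow> 'b \<Rightarrow> bool) \<Rightarrow> bool" where
  "poset_isomorphic P le Q le' \<longleftrightarrow> (\<exists>f. order_iso P le Q le' f)"

definition comp_rel :: "'a set \<Rightarrow> ('a \<Rightarrow> 'a \<Rightarrow> bool) \<Rightarrow> 'a \<Rightarrow> 'a \<Rightarrow> bool" where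
  "comp_rel P le x y \<longleftrightarrow> x \<in> P \<and> y \<in> P \<and> (le x y \<or> le y x)"

definition component :: "'a set \<Rightarrow> ('a \<Rightarrow> 'a \<Rightarrow> bool) \<Rightarrow> 'a \<Rightarrow> 'a set" where
  "component P le x = {y. (comp_rel P le)\<^sup>*\<^sup>* x y}"

definition components :: "'a set \<Rightarrow> ('a \<Rightarrow> 'a \<Rightarrow> bool) \<Rightarrow> 'a set set" where
  "components P le = component P le ` P"

definition order_ideals :: "'a set \<Rightarrow> ('a \<Rightarrow> 'a \<Rightarrow> bool) \<Rightarrow> 'a set set" where
  "order_ideals P le = {I. I \<subseteq> P \<and> (\<forall>x\<in>I. \<forall>y\<in>P. le y x \<longrightarrow> y \<in> I)}"

definition chain_prod :: "nat \<Rightarrow> nat \<Rightarrow> (nat \<times> nat) set" where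
  "chain_prod a b = {(i, j). 1 \<le> i \<and> i \<le> a \<and> 1 \<le> j \<and> j \<le> b}"

definition prod_le :: "nat \<times> nat \<Rightarrow> nat \<times> nat \<Rightarrow> bool" where
  "prod_le p q \<longleftrightarrow> fst p \<le> fst q \<and> snd p \<le> snd q"

definition part :: "nat list \<Rightarrow> nat \<Rightarrow> nat" where
  "part xs i = (if i < length xs then xs ! i else 0)"

definition is_partition :: "nat list \<Rightarrow> bool" where
  "is_partition xs \<longleftrightarrow> sorted_wrt (\<ge>) xs \<and> 0 \<notin> set xs"

definition young_le :: "nat list \<Rightarrow> nat list \<Rightarrow> bool" where
  "young_le \<nu> \<kappa> \<longleftrightarrow> (\<forall>i. part \<nu> i \<le> part \<kappa> i)"

definition young_interval :: "nat \<Rightarrow> nat list set" where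
  "young_interval b = {\<nu>. is_partition \<nu> \<and> young_le \<nu> [b, b]}"

datatype paa_elem = W nat | X | Y | Z nat

definition paa_carrier :: "nat \<Rightarrow> paa_elem set" where
  "paa_carrier a = {W i | i. 1 \<le> i \<and> i \<le> a} \<union> {X, Y} \<union> {Z i | i. 1 \<le> i \<and> i \<le> a}"

definition paa_cover :: "nat \<Rightarrow> paa_elem \<Rightarrow> paa_elem \<Rightarrow> bool" where
  "paa_cover a u v \<longleftrightarrow>
     (\<exists>i. 1 \<le> i \<and> i < a \<and> u = W i \<and> v = W (Suc i)) \<or>
     (u = W a \<and> v = X) \<or> (u = W a \<and> v = Y) \<or>
     (u = X \<and> v = Z 1) \<or> (u = Y \<and> v = Z 1) \<or>
     (\<exists>i. 1 \<le> i \<and> i < a \<and> u = Z i \<and> v = Z (Suc i))"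

definition paa_le :: "nat \<Rightarrow> paa_elem \<Rightarrow> paa_elem \<Rightarrow> bool" where
  "paa_le a = (paa_cover a)\<^sup>*\<^sup>*"

definition shift_delta4 :: "(nat \<times> nat) set" where
  "shift_delta4 = {(i, j). 1 \<le> i \<and> i \<le> j \<and> j \<le> 4}"

definition PE6 :: "(nat \<times> nat) set set" where
  "PE6 = order_ideals shift_delta4 prod_le"

definition PE7 :: "(nat \<times> nat) set set set" where
  "PE7 = order_ideals PE6 (\<subseteq>)"

definition minuscule_connected :: "'a set \<Rightarrow> ('a \<Rightarrow> 'a \<Rightarrow> bool) \<Rightarrow> bool" where
  "minuscule_connected C le \<longleftrightarrow>
     (\<exists>a b. 1 \<le> a \<and> 1 \<le> b \<and> poset_isomorphic C le (chain_prod a b) prod_le) \<or>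
     (\<exists>b. 1 \<le> b \<and> poset_isomorphic C le (young_interval b) young_le) \<or>
     (\<exists>a. 1 \<le> a \<and> poset_isomorphic C le (paa_carrier a) (paa_le a)) \<or>
     poset_isomorphic C le PE6 (\<subseteq>) \<or>
     poset_isomorphic C le PE7 (\<subseteq>)"

definition minuscule_poset :: "'a set \<Rightarrow> ('a \<Rightarrow> 'a \<Rightarrow> bool) \<Rightarrow> bool" where
  "minuscule_poset P le \<longleftrightarrow> finite P \<and> is_poset P le \<and>
     (\<forall>C\<in>components P le. minuscule_connected C le)"

definition expect :: "'b set \<Rightarrow> ('b \<Rightarrow> real) \<Rightarrow> ('b \<Rightarrow> real) \<Rightarrow> real" where
  "expect L \<mu> f = (\<Sum>I\<in>L. \<mu> I * f I)"

definition is_distribution :: "'b set \<Rightarrow> ('b \<Rightarrow> real) \<Rightarrow> bool" where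
  "is_distribution L \<mu> \<longleftrightarrow> (\<forall>I\<in>L. 0 \<le> \<mu> I) \<and> sum \<mu> L = 1"

definition uniform :: "'b set \<Rightarrow> 'b \<Rightarrow> real" where
  "uniform L = (\<lambda>_. 1 / real (card L))"

definition toggle_plus :: "'a set \<Rightarrow> ('a \<Rightarrow> 'a \<Rightarrow> bool) \<Rightarrow> 'a \<Rightarrow> 'a set \<Rightarrow> real" where
  "toggle_plus P le p I =
     (if p \<in> P - I \<and> (\<forall>q\<in>P - I. le q p \<longrightarrow> q = p) then 1 else 0)"

definition toggle_minus :: "'a set \<Rightarrow> ('a \<Rightarrow> 'a \<Rightarrow> bool) \<Rightarrow> 'a \<Rightarrow> 'a set \<Rightarrow> real" where
  "toggle_minus P le p I =
     (if p \<in> I \<and> (\<forall>q\<in>I. le p q \<longrightarrow> q = p) then 1 else 0)"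

definition toggle_symmetric :: "'a set \<Rightarrow> ('a \<Rightarrow> 'a \<Rightarrow> bool) \<Rightarrow> ('a set \<Rightarrow> real) \<Rightarrow> bool" where
  "toggle_symmetric P le \<mu> \<longleftrightarrow>
     (\<forall>p\<in>P. expect (order_ideals P le) \<mu> (toggle_plus P le p) =
             expect (order_ideals P le) \<mu> (toggle_minus P le p))"

definition ddeg :: "'a set set \<Rightarrow> 'a set \<Rightarrow> real" where
  "ddeg L I = real (card {K\<in>L. K \<subset> I \<and> \<not> (\<exists>M\<in>L. K \<subset> M \<and> M \<subset> I)})"

definition tCDE :: "'a set \<Rightarrow> ('a \<Rightarrow> 'a \<Rightarrow> bool) \<Rightarrow> bool" where
  "tCDE P le \<longleftrightarrow>
     (\<forall>\<mu>. is_distribution (order_ideals P le) \<mu> \<and> toggle_symmetric P le \<mu> \<longrightarrow>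
        expect (order_ideals P le) \<mu> (ddeg (order_ideals P le)) =
        expect (order_ideals P le) (uniform (order_ideals P le)) (ddeg (order_ideals P le)))"

end

theory Submission
  imports Defs
begin


definition Fsum :: "'a set \<Rightarrow> ('a \<Rightarrow> 'a \<Rightarrow> bool) \<Rightarrow> ('a \<Rightarrow> real) \<Rightarrow> 'a set \<Rightarrow> real" where
  "Fsum P le c I = (\<Sum>p\<in>P. (1 + c p) * toggle_minus P le p I - c p * toggle_plus P le p I)"

definition Phi :: "'a set \<Rightarrow> ('a \<Rightarrow> 'a \<Rightarrow> bool) \<Rightarrow> bool" where
  "Phi P le \<longleftrightarrow> (\<exists>K c. \<forall>I\<in>order_ideals P le. Fsum P le c I = K)"

lemma sum_ind: "finite A \<Longrightarrow> (\<Sum>x\<in>A. if x \<in> B then (1::real) else 0) = real (card (A \<inter> B))"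
  by (simp add: sum.If_cases)

lemma max_exists:
  assumes "finite A" "A \<noteq> {}" "is_poset P le" "A \<subseteq> P"
  shows "\<exists>p\<in>A. \<forall>q\<in>A. le p q \<longrightarrow> q = p"
proof -
  define f where "f p = card {q\<in>A. le p q}" for p
  obtain p where p: "p \<in> A" "f p = Min (f ` A)"
    using assms(1,2) by (metis (no_types, lifting) Min_in finite_imageI image_iff image_is_empty)
  have "\<forall>q\<in>A. le p q \<longrightarrow> q = p"
  proof (intro ballI impI, rule ccontr)
    fix q assume q: "q \<in> A" "le p q" "q \<noteq> p"
    have sub: "{r\<in>A. le q r} \<subset> {r\<in>A. le p r}"
    proof
      show "{r\<in>A. le q r} \<subseteq> {r\<in>A. le p r}"
        using assms(3,4) p(1) q unfolding is_poset_def by blast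
      have "p \<notin> {r\<in>A. le q r}"
        using assms(3,4) p(1) q unfolding is_poset_def by blast
      moreover have "p \<in> {r\<in>A. le p r}"
        using assms(3,4) p(1) unfolding is_poset_def by blast
      ultimately show "{r\<in>A. le q r} \<noteq> {r\<in>A. le p r}" by blast
    qed
    have "f q < f p" unfolding f_def using psubset_card_mono[OF _ sub] assms(1) by auto
    moreover have "f p \<le> f q" using p q(1) assms(1) by (simp add: Min_le)
    ultimately show False by simp
  qed
  with p show ?thesis by blast
qed

lemma ideal_sub: "I \<in> order_ideals P le \<Longrightarrow> I \<subseteq> P"
  unfolding order_ideals_def by blast

lemma ideal_remove_max:
  assumes "I \<in> order_ideals P le" "p \<in> I" "\<forall>q\<in>I. le p q \<longrightarrow> q = p"
  shows "I - {p} \<in> order_ideals P le"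
  using assms unfolding order_ideals_def by blast

lemma finite_ideals: "finite P \<Longrightarrow> finite (order_ideals P le)"
  unfolding order_ideals_def by (rule finite_subset[of _ "Pow P"]) auto

lemma empty_ideal: "{} \<in> order_ideals P le"
  unfolding order_ideals_def by auto

lemma ddeg_eq:
  assumes fin: "finite P" and po: "is_poset P le" and I: "I \<in> order_ideals P le"
  shows "ddeg (order_ideals P le) I = (\<Sum>p\<in>P. toggle_minus P le p I)"
proof -
  let ?J = "order_ideals P le"
  define M where "M = {p\<in>I. \<forall>q\<in>I. le p q \<longrightarrow> q = p}"
  have IP: "I \<subseteq> P" using I by (rule ideal_sub)
  have MP: "M \<subseteq> P" using IP unfolding M_def by auto
  have rhs: "(\<Sum>p\<in>P. toggle_minus P le p I) = real (card M)"
  proof -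
    have "(\<Sum>p\<in>P. toggle_minus P le p I) = (\<Sum>p\<in>P. if p \<in> M then 1 else 0)"
      unfolding toggle_minus_def M_def by (rule sum.cong) auto
    also have "\<dots> = real (card (P \<inter> M))" using fin by (rule sum_ind)
    also have "P \<inter> M = M" using MP by auto
    finally show ?thesis by simp
  qed
  have seteq: "{K\<in>?J. K \<subset> I \<and> \<not> (\<exists>M\<in>?J. K \<subset> M \<and> M \<subset> I)} = (\<lambda>p. I - {p}) ` M"
  proof
    show "(\<lambda>p. I - {p}) ` M \<subseteq> {K\<in>?J. K \<subset> I \<and> \<not> (\<exists>M\<in>?J. K \<subset> M \<and> M \<subset> I)}"
    proof
      fix K assume "K \<in> (\<lambda>p. I - {p}) ` M"
      then obtain p where p: "p \<in> M" "K = I - {p}" by auto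
      have "K \<in> ?J" using ideal_remove_max[OF I] p unfolding M_def by auto
      moreover have "K \<subset> I" using p unfolding M_def by auto
      moreover have "\<not> (\<exists>M\<in>?J. K \<subset> M \<and> M \<subset> I)" using p by auto
      ultimately show "K \<in> {K\<in>?J. K \<subset> I \<and> \<not> (\<exists>M\<in>?J. K \<subset> M \<and> M \<subset> I)}" by blast
    qed
  next
    show "{K\<in>?J. K \<subset> I \<and> \<not> (\<exists>M\<in>?J. K \<subset> M \<and> M \<subset> I)} \<subseteq> (\<lambda>p. I - {p}) ` M"
    proof
      fix K assume K: "K \<in> {K\<in>?J. K \<subset> I \<and> \<not> (\<exists>M\<in>?J. K \<subset> M \<and> M \<subset> I)}"
      have KJ: "K \<in> ?J" and KI: "K \<subset> I" and cov: "\<not> (\<exists>M\<in>?J. K \<subset> M \<and> M \<subset> I)" using K by auto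
      have "finite (I - K)" using fin IP finite_subset by blast
      moreover have "I - K \<noteq> {}" using KI by auto
      ultimately obtain p where p: "p \<in> I - K" "\<forall>q\<in>I - K. le p q \<longrightarrow> q = p"
        using max_exists[OF _ _ po, of "I - K"] IP by blast
      have pM: "p \<in> M" unfolding M_def
      proof (intro CollectI conjI ballI impI)
        show "p \<in> I" using p by auto
        fix q assume q: "q \<in> I" "le p q"
        have "q \<notin> K"
        proof
          assume "q \<in> K"
          then have "p \<in> K" using KJ q p(1) IP unfolding order_ideals_def by blast
          then show False using p by auto
        qed
        then show "q = p" using p q by auto
      qed
      have "I - {p} \<in> ?J" using ideal_remove_max[OF I] pM unfolding M_def by auto
      moreover have "K \<subseteq> I - {p}" using KI p by auto
      moreover have "I - {p} \<subset> I" using pM unfolding M_def by auto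
      ultimately have "K = I - {p}" using cov by blast
      then show "K \<in> (\<lambda>p. I - {p}) ` M" using pM by blast
    qed
  qed
  have inj: "inj_on (\<lambda>p. I - {p}) M"
    unfolding inj_on_def M_def by blast
  show ?thesis unfolding ddeg_def seteq rhs using card_image[OF inj] by simp
qed

lemma toggle_count:
  assumes fin: "finite P" and p: "p \<in> P"
  shows "(\<Sum>I\<in>order_ideals P le. toggle_plus P le p I) = (\<Sum>I\<in>order_ideals P le. toggle_minus P le p I)"
proof -
  let ?J = "order_ideals P le"
  define Ap where "Ap = {I\<in>?J. p \<in> P - I \<and> (\<forall>q\<in>P - I. le q p \<longrightarrow> q = p)}"
  define Am where "Am = {I\<in>?J. p \<in> I \<and> (\<forall>q\<in>I. le p q \<longrightarrow> q = p)}"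
  have fJ: "finite ?J" using fin by (rule finite_ideals)
  have e1: "(\<Sum>I\<in>?J. toggle_plus P le p I) = real (card Ap)"
  proof -
    have "(\<Sum>I\<in>?J. toggle_plus P le p I) = (\<Sum>I\<in>?J. if I \<in> Ap then 1 else 0)"
      unfolding toggle_plus_def Ap_def by (rule sum.cong) auto
    also have "\<dots> = real (card (?J \<inter> Ap))" using fJ by (rule sum_ind)
    also have "?J \<inter> Ap = Ap" unfolding Ap_def by auto
    finally show ?thesis by simp
  qed
  have e2: "(\<Sum>I\<in>?J. toggle_minus P le p I) = real (card Am)"
  proof -
    have "(\<Sum>I\<in>?J. toggle_minus P le p I) = (\<Sum>I\<in>?J. if I \<in> Am then 1 else 0)"
      unfolding toggle_minus_def Am_def by (rule sum.cong) auto
    also have "\<dots> = real (card (?J \<inter> Am))" using fJ by (rule sum_ind)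
    also have "?J \<inter> Am = Am" unfolding Am_def by auto
    finally show ?thesis by simp
  qed
  have "bij_betw (insert p) Ap Am"
  proof (rule bij_betw_byWitness[where f'="\<lambda>I. I - {p}"])
    show "\<forall>a\<in>Ap. insert p a - {p} = a" unfolding Ap_def by auto
    show "\<forall>a\<in>Am. insert p (a - {p}) = a" unfolding Am_def by auto
    show "insert p ` Ap \<subseteq> Am"
    proof
      fix K assume "K \<in> insert p ` Ap"
      then obtain I where I: "I \<in> Ap" "K = insert p I" by auto
      have IJ: "I \<in> ?J" and pn: "p \<notin> I" and mn: "\<forall>q\<in>P - I. le q p \<longrightarrow> q = p"
        using I(1) unfolding Ap_def by auto
      have "K \<in> ?J" unfolding I(2) using IJ mn p unfolding order_ideals_def by blast
      moreover have "\<forall>q\<in>K. le p q \<longrightarrow> q = p"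
        using IJ pn p unfolding I(2) order_ideals_def by blast
      ultimately show "K \<in> Am" unfolding Am_def I(2) by blast
    qed
    show "(\<lambda>I. I - {p}) ` Am \<subseteq> Ap"
    proof
      fix K assume "K \<in> (\<lambda>I. I - {p}) ` Am"
      then obtain I where I: "I \<in> Am" "K = I - {p}" by auto
      have IJ: "I \<in> ?J" and pI: "p \<in> I" and mx: "\<forall>q\<in>I. le p q \<longrightarrow> q = p"
        using I(1) unfolding Am_def by auto
      have "K \<in> ?J" unfolding I(2) using ideal_remove_max[OF IJ pI mx] .
      moreover have "\<forall>q\<in>P - K. le q p \<longrightarrow> q = p"
        using IJ pI unfolding I(2) order_ideals_def by blast
      ultimately show "K \<in> Ap" unfolding Ap_def I(2) using p by blast
    qed
  qed
  then have "card Ap = card Am" by (rule bij_betw_same_card)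
  then show ?thesis using e1 e2 by simp
qed

lemma expect_K:
  assumes fin: "finite P" and po: "is_poset P le"
    and F: "\<forall>I\<in>order_ideals P le. Fsum P le c I = K"
    and dist: "is_distribution (order_ideals P le) \<mu>"
    and ts: "toggle_symmetric P le \<mu>"
  shows "expect (order_ideals P le) \<mu> (ddeg (order_ideals P le)) = K"
proof -
  let ?J = "order_ideals P le"
  let ?tp = "toggle_plus P le" and ?tm = "toggle_minus P le"
  have dd: "ddeg ?J I = K + (\<Sum>p\<in>P. c p * (?tp p I - ?tm p I))" if I: "I \<in> ?J" for I
  proof -
    have "Fsum P le c I = (\<Sum>p\<in>P. ?tm p I + c p * (?tm p I - ?tp p I))"
      unfolding Fsum_def by (rule sum.cong) (auto simp: algebra_simps)
    also have "\<dots> = (\<Sum>p\<in>P. ?tm p I) + (\<Sum>p\<in>P. c p * (?tm p I - ?tp p I))"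
      by (rule sum.distrib)
    finally have "(\<Sum>p\<in>P. ?tm p I) = K - (\<Sum>p\<in>P. c p * (?tm p I - ?tp p I))"
      using F I by simp
    also have "(\<Sum>p\<in>P. c p * (?tm p I - ?tp p I)) = - (\<Sum>p\<in>P. c p * (?tp p I - ?tm p I))"
      unfolding sum_negf[symmetric] by (rule sum.cong) (auto simp: algebra_simps)
    also have "K - - (\<Sum>p\<in>P. c p * (?tp p I - ?tm p I)) = K + (\<Sum>p\<in>P. c p * (?tp p I - ?tm p I))"
      by simp
    finally show ?thesis using ddeg_eq[OF fin po I] by simp
  qed
  have "expect ?J \<mu> (ddeg ?J) = (\<Sum>I\<in>?J. \<mu> I * K + (\<Sum>p\<in>P. c p * (\<mu> I * ?tp p I - \<mu> I * ?tm p I)))"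
    unfolding expect_def
    by (rule sum.cong) (auto simp: dd sum_distrib_left algebra_simps)
  also have "\<dots> = (\<Sum>I\<in>?J. \<mu> I) * K + (\<Sum>p\<in>P. c p * ((\<Sum>I\<in>?J. \<mu> I * ?tp p I) - (\<Sum>I\<in>?J. \<mu> I * ?tm p I)))"
    by (simp add: sum.distrib sum_distrib_left sum_distrib_right sum_subtractf sum.swap[of _ P] algebra_simps)
  also have "(\<Sum>I\<in>?J. \<mu> I) = 1" using dist unfolding is_distribution_def by simp
  also have "(\<Sum>p\<in>P. c p * ((\<Sum>I\<in>?J. \<mu> I * ?tp p I) - (\<Sum>I\<in>?J. \<mu> I * ?tm p I))) = 0"
    using ts unfolding toggle_symmetric_def expect_def by (intro sum.neutral) auto
  finally show ?thesis by simp
qed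

lemma Phi_tCDE:
  assumes fin: "finite P" and po: "is_poset P le" and ph: "Phi P le"
  shows "tCDE P le"
proof -
  let ?J = "order_ideals P le"
  obtain K c where F: "\<forall>I\<in>?J. Fsum P le c I = K" using ph unfolding Phi_def by blast
  have fJ: "finite ?J" using fin by (rule finite_ideals)
  have cJ: "card ?J > 0" using fJ empty_ideal card_gt_0_iff by blast
  have ud: "is_distribution ?J (uniform ?J)"
    unfolding is_distribution_def uniform_def using cJ by simp
  have ut: "toggle_symmetric P le (uniform ?J)"
    unfolding toggle_symmetric_def expect_def uniform_def
    using toggle_count[OF fin] by (simp add: sum_divide_distrib[symmetric])
  show ?thesis unfolding tCDE_def
    using expect_K[OF fin po F] ud ut by simp
qed




lemma rtc_in_P: "(comp_rel P le)\<^sup>*\<^sup>* x y \<Longrightarrow> x \<in> P \<Longrightarrow> y \<in> P"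
  by (induction rule: rtranclp_induct) (auto simp: comp_rel_def)

lemma comp_sub: "x \<in> P \<Longrightarrow> component P le x \<subseteq> P"
  unfolding component_def using rtc_in_P by fastforce

lemma comp_self: "x \<in> component P le x"
  unfolding component_def by simp

lemma symp_comp_rel: "symp (comp_rel P le)"
  unfolding symp_def comp_rel_def by blast

lemma comp_eq:
  assumes "y \<in> component P le x"
  shows "component P le y = component P le x"
proof -
  have xy: "(comp_rel P le)\<^sup>*\<^sup>* x y" using assms unfolding component_def by simp
  have yx: "(comp_rel P le)\<^sup>*\<^sup>* y x"
    using sympD[OF symp_rtranclp[OF symp_comp_rel] xy] .
  have "(comp_rel P le)\<^sup>*\<^sup>* y z \<longleftrightarrow> (comp_rel P le)\<^sup>*\<^sup>* x z" for z
    using xy yx rtranclp_trans[of "comp_rel P le"] by metis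
  then show ?thesis unfolding component_def by blast
qed

lemma comp_closed:
  assumes "p \<in> component P le x" "x \<in> P" "q \<in> P" "le q p \<or> le p q"
  shows "q \<in> component P le x"
proof -
  have "p \<in> P" using comp_sub[OF assms(2), of le] assms(1) by blast
  then have "comp_rel P le p q" using assms(3,4) unfolding comp_rel_def by auto
  moreover have "(comp_rel P le)\<^sup>*\<^sup>* x p" using assms(1) unfolding component_def by simp
  ultimately have "(comp_rel P le)\<^sup>*\<^sup>* x q" by (metis rtranclp.rtrancl_into_rtrancl)
  then show ?thesis unfolding component_def by simp
qed

lemma toggles_comp:
  assumes I: "I \<in> order_ideals P le" and x: "x \<in> P" and C: "C = component P le x" and p: "p \<in> C"
  shows "toggle_minus P le p I = toggle_minus C le p (I \<inter> C)"
    and "toggle_plus P le p I = toggle_plus C le p (I \<inter> C)"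
proof -
  have CP: "C \<subseteq> P" using comp_sub[OF x, of le] C by simp
  have IP: "I \<subseteq> P" using I by (rule ideal_sub)
  have cl: "\<And>q. q \<in> P \<Longrightarrow> le q p \<or> le p q \<Longrightarrow> q \<in> C"
    using comp_closed[of p P le x] p x C by blast
  show "toggle_minus P le p I = toggle_minus C le p (I \<inter> C)"
  proof -
    have "(p \<in> I \<and> (\<forall>q\<in>I. le p q \<longrightarrow> q = p)) \<longleftrightarrow> (p \<in> I \<inter> C \<and> (\<forall>q\<in>I \<inter> C. le p q \<longrightarrow> q = p))"
      using p cl IP by blast
    then show ?thesis unfolding toggle_minus_def by simp
  qed
  show "toggle_plus P le p I = toggle_plus C le p (I \<inter> C)"
  proof -
    have "(p \<in> P - I \<and> (\<forall>q\<in>P - I. le q p \<longrightarrow> q = p)) \<longleftrightarrow> (p \<in> C - I \<inter> C \<and> (\<forall>q\<in>C - I \<inter> C. le q p \<longrightarrow> q = p))"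
      using p cl CP by blast
    then show ?thesis unfolding toggle_plus_def by simp
  qed
qed

lemma ideal_comp:
  assumes "I \<in> order_ideals P le" "C \<subseteq> P"
  shows "I \<inter> C \<in> order_ideals C le"
  using assms unfolding order_ideals_def by auto

lemma Phi_components:
  assumes fin: "finite P" and ph: "\<forall>C\<in>components P le. Phi C le"
  shows "Phi P le"
proof -
  let ?Cs = "components P le"
  have "\<forall>C\<in>?Cs. \<exists>K c. \<forall>I\<in>order_ideals C le. Fsum C le c I = K"
    using ph unfolding Phi_def by blast
  then obtain Kf where "\<forall>C\<in>?Cs. \<exists>c. \<forall>I\<in>order_ideals C le. Fsum C le c I = Kf C"
    by metis
  then obtain cf where cf: "\<forall>C\<in>?Cs. \<forall>I\<in>order_ideals C le. Fsum C le (cf C) I = Kf C"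
    by metis
  define c where "c p = cf (component P le p) p" for p
  have finC: "\<forall>C\<in>?Cs. finite C"
    using fin comp_sub[of _ P le] unfolding components_def by (auto intro: finite_subset)
  have disj: "\<forall>A\<in>?Cs. \<forall>B\<in>?Cs. A \<noteq> B \<longrightarrow> A \<inter> B = {}"
    unfolding components_def using comp_eq[of _ P le] by blast
  have unionP: "\<Union>?Cs = P"
    unfolding components_def using comp_sub[of _ P le] comp_self[of _ P le] by blast
  have fCs: "finite ?Cs" unfolding components_def using fin by simp
  have "\<forall>I\<in>order_ideals P le. Fsum P le c I = (\<Sum>C\<in>?Cs. Kf C)"
  proof
    fix I assume I: "I \<in> order_ideals P le"
    let ?g = "\<lambda>p. (1 + c p) * toggle_minus P le p I - c p * toggle_plus P le p I"
    have "Fsum P le c I = sum ?g (\<Union>?Cs)" unfolding Fsum_def unionP ..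
    also have "\<dots> = (\<Sum>C\<in>?Cs. sum ?g C)" using sum.Union_disjoint[OF finC disj] by simp
    also have "\<dots> = (\<Sum>C\<in>?Cs. Kf C)"
    proof (rule sum.cong[OF refl])
      fix C assume C: "C \<in> ?Cs"
      then obtain x where x: "x \<in> P" "C = component P le x" unfolding components_def by auto
      have "sum ?g C = Fsum C le (cf C) (I \<inter> C)"
        unfolding Fsum_def
      proof (rule sum.cong[OF refl])
        fix p assume p: "p \<in> C"
        have "component P le p = C" using comp_eq[of p P le x] p x(2) by simp
        then have "c p = cf C p" unfolding c_def by simp
        then show "?g p = (1 + cf C p) * toggle_minus C le p (I \<inter> C) - cf C p * toggle_plus C le p (I \<inter> C)"
          using toggles_comp[OF I x p] by simp
      qed
      also have "\<dots> = Kf C" using cf C ideal_comp[OF I comp_sub[OF x(1), of le]] x(2) by simp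
      finally show "sum ?g C = Kf C" .
    qed
    finally show "Fsum P le c I = (\<Sum>C\<in>?Cs. Kf C)" .
  qed
  then show ?thesis unfolding Phi_def by blast
qed

lemma ideal_image:
  assumes iso: "order_iso C le S le' f" and I: "I \<in> order_ideals C le"
  shows "f ` I \<in> order_ideals S le'"
proof -
  have bij: "bij_betw f C S" and ord: "\<forall>x\<in>C. \<forall>y\<in>C. le x y \<longleftrightarrow> le' (f x) (f y)"
    using iso unfolding order_iso_def by auto
  have IC: "I \<subseteq> C" using I by (rule ideal_sub)
  have S: "S = f ` C" using bij by (simp add: bij_betw_def)
  show ?thesis unfolding order_ideals_def
  proof (intro CollectI conjI ballI impI)
    show "f ` I \<subseteq> S" using IC S by auto
    fix x' y' assume x': "x' \<in> f ` I" and y': "y' \<in> S" and le: "le' y' x'"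
    obtain x where x: "x \<in> I" "x' = f x" using x' by auto
    obtain y where y: "y \<in> C" "y' = f y" using y' S by auto
    have "le y x" using ord x y le IC by auto
    then have "y \<in> I" using I x y unfolding order_ideals_def by auto
    then show "y' \<in> f ` I" using y by auto
  qed
qed

lemma Phi_iso:
  assumes iso: "order_iso C le S le' f" and ph: "Phi S le'"
  shows "Phi C le"
proof -
  obtain K c' where F: "\<forall>I\<in>order_ideals S le'. Fsum S le' c' I = K" using ph unfolding Phi_def by blast
  have bij: "bij_betw f C S" and ord: "\<forall>x\<in>C. \<forall>y\<in>C. le x y \<longleftrightarrow> le' (f x) (f y)"
    using iso unfolding order_iso_def by auto
  have inj: "inj_on f C" using bij by (simp add: bij_betw_def)
  have S: "S = f ` C" using bij by (simp add: bij_betw_def)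
  have "\<forall>I\<in>order_ideals C le. Fsum C le (c' \<circ> f) I = K"
  proof
    fix I assume I: "I \<in> order_ideals C le"
    have IC: "I \<subseteq> C" using I by (rule ideal_sub)
    have fI: "f ` I \<in> order_ideals S le'" using ideal_image[OF iso I] .
    have mem: "\<And>p. p \<in> C \<Longrightarrow> f p \<in> f ` I \<longleftrightarrow> p \<in> I"
      using inj_on_image_mem_iff[OF inj _ IC] by blast
    have diff: "S - f ` I = f ` (C - I)" using S inj IC by (simp add: inj_on_image_set_diff)
    have tm: "toggle_minus C le p I = toggle_minus S le' (f p) (f ` I)" if p: "p \<in> C" for p
    proof -
      have "(p \<in> I \<and> (\<forall>q\<in>I. le p q \<longrightarrow> q = p)) \<longleftrightarrow>
            (f p \<in> f ` I \<and> (\<forall>q'\<in>f ` I. le' (f p) q' \<longrightarrow> q' = f p))"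
      proof
        assume L: "p \<in> I \<and> (\<forall>q\<in>I. le p q \<longrightarrow> q = p)"
        show "f p \<in> f ` I \<and> (\<forall>q'\<in>f ` I. le' (f p) q' \<longrightarrow> q' = f p)"
        proof (intro conjI ballI impI)
          show "f p \<in> f ` I" using L by blast
          fix q' assume q': "q' \<in> f ` I" "le' (f p) q'"
          then obtain q where q: "q \<in> I" "q' = f q" by blast
          have "le p q" using ord p q IC q' by blast
          then show "q' = f p" using L q by blast
        qed
      next
        assume R: "f p \<in> f ` I \<and> (\<forall>q'\<in>f ` I. le' (f p) q' \<longrightarrow> q' = f p)"
        show "p \<in> I \<and> (\<forall>q\<in>I. le p q \<longrightarrow> q = p)"
        proof (intro conjI ballI impI)
          show "p \<in> I" using R mem[OF p] by blast
          fix q assume q: "q \<in> I" "le p q"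
          have "le' (f p) (f q)" using ord p q IC by blast
          then have "f q = f p" using R q by blast
          then show "q = p" using inj p q IC unfolding inj_on_def by blast
        qed
      qed
      then show ?thesis unfolding toggle_minus_def by simp
    qed
    have tp: "toggle_plus C le p I = toggle_plus S le' (f p) (f ` I)" if p: "p \<in> C" for p
    proof -
      have "(p \<in> C - I \<and> (\<forall>q\<in>C - I. le q p \<longrightarrow> q = p)) \<longleftrightarrow>
            (f p \<in> S - f ` I \<and> (\<forall>q'\<in>S - f ` I. le' q' (f p) \<longrightarrow> q' = f p))"
        unfolding diff
      proof
        assume L: "p \<in> C - I \<and> (\<forall>q\<in>C - I. le q p \<longrightarrow> q = p)"
        show "f p \<in> f ` (C - I) \<and> (\<forall>q'\<in>f ` (C - I). le' q' (f p) \<longrightarrow> q' = f p)"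
        proof (intro conjI ballI impI)
          show "f p \<in> f ` (C - I)" using L by blast
          fix q' assume q': "q' \<in> f ` (C - I)" "le' q' (f p)"
          then obtain q where q: "q \<in> C - I" "q' = f q" by blast
          have "le q p" using ord p q q' by blast
          then show "q' = f p" using L q by blast
        qed
      next
        assume R: "f p \<in> f ` (C - I) \<and> (\<forall>q'\<in>f ` (C - I). le' q' (f p) \<longrightarrow> q' = f p)"
        show "p \<in> C - I \<and> (\<forall>q\<in>C - I. le q p \<longrightarrow> q = p)"
        proof (intro conjI ballI impI)
          show "p \<in> C - I" using R mem[OF p] p diff by blast
          fix q assume q: "q \<in> C - I" "le q p"
          have "le' (f q) (f p)" using ord p q by blast
          then have "f q = f p" using R q by blast
          then show "q = p" using inj p q unfolding inj_on_def by blast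
        qed
      qed
      then show ?thesis unfolding toggle_plus_def by simp
    qed
    have "Fsum C le (c' \<circ> f) I = (\<Sum>p\<in>C. (\<lambda>q. (1 + c' q) * toggle_minus S le' q (f ` I) - c' q * toggle_plus S le' q (f ` I)) (f p))"
      unfolding Fsum_def by (rule sum.cong) (auto simp: tm tp)
    also have "\<dots> = Fsum S le' c' (f ` I)"
      unfolding Fsum_def by (rule sum.reindex_bij_betw[OF bij])
    also have "\<dots> = K" using F fI by blast
    finally show "Fsum C le (c' \<circ> f) I = K" .
  qed
  then show ?thesis unfolding Phi_def by blast
qed

lemma Phi_isomorphic:
  "poset_isomorphic C le S le' \<Longrightarrow> Phi S le' \<Longrightarrow> Phi C le"
  unfolding poset_isomorphic_def using Phi_iso by blast

lemma J_iso:
  assumes iso: "order_iso P le Q le' f"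
  shows "order_iso (order_ideals P le) (\<subseteq>) (order_ideals Q le') (\<subseteq>) (image f)"
proof -
  have bij: "bij_betw f P Q" and ord: "\<forall>x\<in>P. \<forall>y\<in>P. le x y \<longleftrightarrow> le' (f x) (f y)"
    using iso unfolding order_iso_def by auto
  have inj: "inj_on f P" using bij by (simp add: bij_betw_def)
  have Q: "Q = f ` P" using bij by (simp add: bij_betw_def)
  have "inj_on (image f) (order_ideals P le)"
  proof (rule inj_onI)
    fix I1 I2 assume "I1 \<in> order_ideals P le" "I2 \<in> order_ideals P le" "f ` I1 = f ` I2"
    then show "I1 = I2" using inj_on_image_eq_iff[OF inj ideal_sub ideal_sub] by metis
  qed
  moreover have "image f ` order_ideals P le = order_ideals Q le'"
  proof
    show "image f ` order_ideals P le \<subseteq> order_ideals Q le'" using ideal_image[OF iso] by blast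
    show "order_ideals Q le' \<subseteq> image f ` order_ideals P le"
    proof
      fix I' assume I': "I' \<in> order_ideals Q le'"
      define I where "I = {x\<in>P. f x \<in> I'}"
      have "I \<in> order_ideals P le"
        using I' ord Q unfolding order_ideals_def I_def by auto
      moreover have "f ` I = I'" using ideal_sub[OF I'] Q unfolding I_def by auto
      ultimately show "I' \<in> image f ` order_ideals P le" by blast
    qed
  qed
  moreover have "\<forall>I\<in>order_ideals P le. \<forall>I2\<in>order_ideals P le. I \<subseteq> I2 \<longleftrightarrow> f ` I \<subseteq> f ` I2"
  proof (intro ballI)
    fix I I2 assume "I \<in> order_ideals P le" "I2 \<in> order_ideals P le"
    then have "I \<subseteq> P" "I2 \<subseteq> P" using ideal_sub by auto
    then show "I \<subseteq> I2 \<longleftrightarrow> f ` I \<subseteq> f ` I2" using inj unfolding inj_on_def by blast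
  qed
  ultimately show ?thesis unfolding order_iso_def bij_betw_def by blast
qed




definition pz :: "int \<times> int \<Rightarrow> int \<times> int \<Rightarrow> bool" where
  "pz p q \<longleftrightarrow> fst p \<le> fst q \<and> snd p \<le> snd q"

lemma pz_simp[simp]: "pz (a, b) (a', b') \<longleftrightarrow> a \<le> a' \<and> b \<le> b'"
  unfolding pz_def by simp

lemma is_poset_pz: "is_poset S pz"
  unfolding is_poset_def pz_def by auto

definition Lx :: "(int \<times> int) set \<Rightarrow> (int \<times> int \<Rightarrow> real) \<Rightarrow> int \<Rightarrow> int \<Rightarrow> bool \<Rightarrow> bool \<Rightarrow> real" where
  "Lx S c x y u v = 1 + 2 * c (x,y)
     - (if (x-1,y) \<in> S \<and> \<not> u then 1 + c (x-1,y) else 0)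
     - (if (x,y-1) \<in> S \<and> \<not> v then 1 + c (x,y-1) else 0)
     - (if (x+1,y) \<in> S \<and> (v \<or> (x+1,y-1) \<notin> S) then c (x+1,y) else 0)
     - (if (x,y+1) \<in> S \<and> (u \<or> (x-1,y+1) \<notin> S) then c (x,y+1) else 0)"

context
  fixes S :: "(int \<times> int) set"
  assumes up: "\<And>a b a' b'. (a,b)\<in>S \<Longrightarrow> (a',b')\<in>S \<Longrightarrow> pz (a,b) (a',b') \<Longrightarrow> (a,b) \<noteq> (a',b') \<Longrightarrow>
      ((a+1,b)\<in>S \<and> pz (a+1,b) (a',b')) \<or> ((a,b+1)\<in>S \<and> pz (a,b+1) (a',b'))"
  and down: "\<And>a b a' b'. (a,b)\<in>S \<Longrightarrow> (a',b')\<in>S \<Longrightarrow> pz (a,b) (a',b') \<Longrightarrow> (a,b) \<noteq> (a',b') \<Longrightarrow>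
      ((a'-1,b')\<in>S \<and> pz (a,b) (a'-1,b')) \<or> ((a',b'-1)\<in>S \<and> pz (a,b) (a',b'-1))"
begin

context
  fixes J0 :: "(int \<times> int) set" and x y :: int
  assumes J0: "J0 \<in> order_ideals S pz"
  and q: "(x,y) \<in> S" "(x,y) \<notin> J0"
  and mn: "\<And>s. s \<in> S \<Longrightarrow> pz s (x,y) \<Longrightarrow> s \<noteq> (x,y) \<Longrightarrow> s \<in> J0"
begin

lemma J0S: "J0 \<subseteq> S" using J0 by (rule ideal_sub)

lemma J0dc: "r \<in> J0 \<Longrightarrow> s \<in> S \<Longrightarrow> pz s r \<Longrightarrow> s \<in> J0"
  using J0 unfolding order_ideals_def by blast

lemma tm_q: "toggle_minus S pz (x,y) (insert (x,y) J0) = 1"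
proof -
  have "\<forall>r\<in>insert (x,y) J0. pz (x,y) r \<longrightarrow> r = (x,y)"
    using J0dc q by blast
  then show ?thesis unfolding toggle_minus_def by simp
qed

lemma tp_q: "toggle_plus S pz (x,y) (insert (x,y) J0) = 0"
  unfolding toggle_plus_def by simp

lemma tm_q0: "toggle_minus S pz (x,y) J0 = 0"
  unfolding toggle_minus_def using q by simp

lemma tp_q0: "toggle_plus S pz (x,y) J0 = 1"
proof -
  have "\<forall>r\<in>S - J0. pz r (x,y) \<longrightarrow> r = (x,y)" using mn by blast
  then show ?thesis unfolding toggle_plus_def using q by simp
qed

lemma left_in: "(x-1,y) \<in> S \<Longrightarrow> (x-1,y) \<in> J0"
  using mn[of "(x-1,y)"] by simp

lemma low_in: "(x,y-1) \<in> S \<Longrightarrow> (x,y-1) \<in> J0"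
  using mn[of "(x,y-1)"] by simp

lemma tm_left:
  assumes p: "(x-1,y) \<in> S"
  shows "toggle_minus S pz (x-1,y) (insert (x,y) J0) = 0"
    and "toggle_plus S pz (x-1,y) (insert (x,y) J0) = 0"
    and "toggle_plus S pz (x-1,y) J0 = 0"
    and "toggle_minus S pz (x-1,y) J0 = (if (x-1,y+1) \<in> J0 then 0 else 1)"
proof -
  have pin: "(x-1,y) \<in> J0" using left_in p .
  show "toggle_minus S pz (x-1,y) (insert (x,y) J0) = 0"
    unfolding toggle_minus_def by auto
  show "toggle_plus S pz (x-1,y) (insert (x,y) J0) = 0"
    unfolding toggle_plus_def using pin by auto
  show "toggle_plus S pz (x-1,y) J0 = 0"
    unfolding toggle_plus_def using pin by auto
  show "toggle_minus S pz (x-1,y) J0 = (if (x-1,y+1) \<in> J0 then 0 else 1)"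
  proof (cases "(x-1,y+1) \<in> J0")
    case True
    have "pz (x-1,y) (x-1,y+1)" "(x-1,y+1) \<noteq> (x-1,y)" by simp_all
    then have "\<not> (\<forall>r\<in>J0. pz (x-1,y) r \<longrightarrow> r = (x-1,y))" using True by blast
    then show ?thesis unfolding toggle_minus_def using True by simp
  next
    case False
    have "\<forall>r\<in>J0. pz (x-1,y) r \<longrightarrow> r = (x-1,y)"
    proof (intro ballI impI, rule ccontr)
      fix r assume r: "r \<in> J0" "pz (x-1,y) r" "r \<noteq> (x-1,y)"
      obtain a' b' where ab: "r = (a',b')" by (cases r)
      have rS: "(a',b') \<in> S" using r ab J0S by auto
      from up[OF p rS] r ab
      have "((x,y)\<in>S \<and> pz (x,y) (a',b')) \<or> ((x-1,y+1)\<in>S \<and> pz (x-1,y+1) (a',b'))" by auto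
      then show False
      proof
        assume "(x,y)\<in>S \<and> pz (x,y) (a',b')"
        then have "(x,y) \<in> J0" using J0dc r ab by blast
        then show False using q by simp
      next
        assume "(x-1,y+1)\<in>S \<and> pz (x-1,y+1) (a',b')"
        then have "(x-1,y+1) \<in> J0" using J0dc r ab by blast
        then show False using False by simp
      qed
    qed
    then show ?thesis unfolding toggle_minus_def using pin False by simp
  qed
qed

lemma tm_low:
  assumes p: "(x,y-1) \<in> S"
  shows "toggle_minus S pz (x,y-1) (insert (x,y) J0) = 0"
    and "toggle_plus S pz (x,y-1) (insert (x,y) J0) = 0"
    and "toggle_plus S pz (x,y-1) J0 = 0"
    and "toggle_minus S pz (x,y-1) J0 = (if (x+1,y-1) \<in> J0 then 0 else 1)"
proof -
  have pin: "(x,y-1) \<in> J0" using low_in p .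
  show "toggle_minus S pz (x,y-1) (insert (x,y) J0) = 0"
    unfolding toggle_minus_def by auto
  show "toggle_plus S pz (x,y-1) (insert (x,y) J0) = 0"
    unfolding toggle_plus_def using pin by auto
  show "toggle_plus S pz (x,y-1) J0 = 0"
    unfolding toggle_plus_def using pin by auto
  show "toggle_minus S pz (x,y-1) J0 = (if (x+1,y-1) \<in> J0 then 0 else 1)"
  proof (cases "(x+1,y-1) \<in> J0")
    case True
    have "pz (x,y-1) (x+1,y-1)" "(x+1,y-1) \<noteq> (x,y-1)" by simp_all
    then have "\<not> (\<forall>r\<in>J0. pz (x,y-1) r \<longrightarrow> r = (x,y-1))" using True by blast
    then show ?thesis unfolding toggle_minus_def using True by simp
  next
    case False
    have "\<forall>r\<in>J0. pz (x,y-1) r \<longrightarrow> r = (x,y-1)"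
    proof (intro ballI impI, rule ccontr)
      fix r assume r: "r \<in> J0" "pz (x,y-1) r" "r \<noteq> (x,y-1)"
      obtain a' b' where ab: "r = (a',b')" by (cases r)
      have rS: "(a',b') \<in> S" using r ab J0S by auto
      from up[OF p rS] r ab
      have "((x+1,y-1)\<in>S \<and> pz (x+1,y-1) (a',b')) \<or> ((x,y)\<in>S \<and> pz (x,y) (a',b'))" by auto
      then show False
      proof
        assume "(x+1,y-1)\<in>S \<and> pz (x+1,y-1) (a',b')"
        then have "(x+1,y-1) \<in> J0" using J0dc r ab by blast
        then show False using False by simp
      next
        assume "(x,y)\<in>S \<and> pz (x,y) (a',b')"
        then have "(x,y) \<in> J0" using J0dc r ab by blast
        then show False using q by simp
      qed
    qed
    then show ?thesis unfolding toggle_minus_def using pin False by simp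
  qed
qed

lemma tm_right:
  assumes p: "(x+1,y) \<in> S"
  shows "toggle_minus S pz (x+1,y) (insert (x,y) J0) = 0"
    and "toggle_minus S pz (x+1,y) J0 = 0"
    and "toggle_plus S pz (x+1,y) J0 = 0"
    and "toggle_plus S pz (x+1,y) (insert (x,y) J0) = (if (x+1,y-1) \<in> S \<and> (x+1,y-1) \<notin> J0 then 0 else 1)"
proof -
  have pn: "(x+1,y) \<notin> J0"
  proof
    assume "(x+1,y) \<in> J0"
    then have "(x,y) \<in> J0" using J0dc q(1) by simp
    then show False using q by simp
  qed
  show "toggle_minus S pz (x+1,y) (insert (x,y) J0) = 0"
    unfolding toggle_minus_def using pn by auto
  show "toggle_minus S pz (x+1,y) J0 = 0"
    unfolding toggle_minus_def using pn by auto
  have "(x,y) \<in> S - J0" "pz (x,y) (x+1,y)" "(x,y) \<noteq> (x+1,y)" using q by auto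
  then have "\<not> (\<forall>r\<in>S - J0. pz r (x+1,y) \<longrightarrow> r = (x+1,y))" by blast
  then show "toggle_plus S pz (x+1,y) J0 = 0"
    unfolding toggle_plus_def by auto
  show "toggle_plus S pz (x+1,y) (insert (x,y) J0) = (if (x+1,y-1) \<in> S \<and> (x+1,y-1) \<notin> J0 then 0 else 1)"
  proof (cases "(x+1,y-1) \<in> S \<and> (x+1,y-1) \<notin> J0")
    case True
    have "(x+1,y-1) \<in> S - insert (x,y) J0" "pz (x+1,y-1) (x+1,y)" "(x+1,y-1) \<noteq> (x+1,y)"
      using True by auto
    then have "\<not> (\<forall>r\<in>S - insert (x,y) J0. pz r (x+1,y) \<longrightarrow> r = (x+1,y))" by blast
    then show ?thesis unfolding toggle_plus_def using True by auto
  next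
    case False
    have "\<forall>r\<in>S - insert (x,y) J0. pz r (x+1,y) \<longrightarrow> r = (x+1,y)"
    proof (intro ballI impI, rule ccontr)
      fix r assume r: "r \<in> S - insert (x,y) J0" "pz r (x+1,y)" "r \<noteq> (x+1,y)"
      obtain a' b' where ab: "r = (a',b')" by (cases r)
      have rS: "(a',b') \<in> S" using r ab by auto
      from down[OF rS p] r ab
      have "((x,y)\<in>S \<and> pz (a',b') (x,y)) \<or> ((x+1,y-1)\<in>S \<and> pz (a',b') (x+1,y-1))" by auto
      then show False
      proof
        assume "(x,y)\<in>S \<and> pz (a',b') (x,y)"
        then have "r \<in> J0" using mn[of r] r ab by auto
        then show False using r by simp
      next
        assume a: "(x+1,y-1)\<in>S \<and> pz (a',b') (x+1,y-1)"
        then have "(x+1,y-1) \<in> J0" using False by simp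
        then have "r \<in> J0" using J0dc a ab rS by blast
        then show False using r by simp
      qed
    qed
    then show ?thesis unfolding toggle_plus_def using False pn p by auto
  qed
qed

lemma tm_upper:
  assumes p: "(x,y+1) \<in> S"
  shows "toggle_minus S pz (x,y+1) (insert (x,y) J0) = 0"
    and "toggle_minus S pz (x,y+1) J0 = 0"
    and "toggle_plus S pz (x,y+1) J0 = 0"
    and "toggle_plus S pz (x,y+1) (insert (x,y) J0) = (if (x-1,y+1) \<in> S \<and> (x-1,y+1) \<notin> J0 then 0 else 1)"
proof -
  have pn: "(x,y+1) \<notin> J0"
  proof
    assume "(x,y+1) \<in> J0"
    then have "(x,y) \<in> J0" using J0dc q(1) by simp
    then show False using q by simp
  qed
  show "toggle_minus S pz (x,y+1) (insert (x,y) J0) = 0"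
    unfolding toggle_minus_def using pn by auto
  show "toggle_minus S pz (x,y+1) J0 = 0"
    unfolding toggle_minus_def using pn by auto
  have "(x,y) \<in> S - J0" "pz (x,y) (x,y+1)" "(x,y) \<noteq> (x,y+1)" using q by auto
  then have "\<not> (\<forall>r\<in>S - J0. pz r (x,y+1) \<longrightarrow> r = (x,y+1))" by blast
  then show "toggle_plus S pz (x,y+1) J0 = 0"
    unfolding toggle_plus_def by auto
  show "toggle_plus S pz (x,y+1) (insert (x,y) J0) = (if (x-1,y+1) \<in> S \<and> (x-1,y+1) \<notin> J0 then 0 else 1)"
  proof (cases "(x-1,y+1) \<in> S \<and> (x-1,y+1) \<notin> J0")
    case True
    have "(x-1,y+1) \<in> S - insert (x,y) J0" "pz (x-1,y+1) (x,y+1)" "(x-1,y+1) \<noteq> (x,y+1)"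
      using True by auto
    then have "\<not> (\<forall>r\<in>S - insert (x,y) J0. pz r (x,y+1) \<longrightarrow> r = (x,y+1))" by blast
    then show ?thesis unfolding toggle_plus_def using True by auto
  next
    case False
    have "\<forall>r\<in>S - insert (x,y) J0. pz r (x,y+1) \<longrightarrow> r = (x,y+1)"
    proof (intro ballI impI, rule ccontr)
      fix r assume r: "r \<in> S - insert (x,y) J0" "pz r (x,y+1)" "r \<noteq> (x,y+1)"
      obtain a' b' where ab: "r = (a',b')" by (cases r)
      have rS: "(a',b') \<in> S" using r ab by auto
      from down[OF rS p] r ab
      have "((x-1,y+1)\<in>S \<and> pz (a',b') (x-1,y+1)) \<or> ((x,y)\<in>S \<and> pz (a',b') (x,y))" by auto
      then show False
      proof
        assume a: "(x-1,y+1)\<in>S \<and> pz (a',b') (x-1,y+1)"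
        then have "(x-1,y+1) \<in> J0" using False by simp
        then have "r \<in> J0" using J0dc a ab rS by blast
        then show False using r by simp
      next
        assume "(x,y)\<in>S \<and> pz (a',b') (x,y)"
        then have "r \<in> J0" using mn[of r] r ab by auto
        then show False using r by simp
      qed
    qed
    then show ?thesis unfolding toggle_plus_def using False pn p by auto
  qed
qed

lemma tog_other:
  assumes pS: "(a,b) \<in> S" and pn: "(a,b) \<notin> {(x,y),(x-1,y),(x,y-1),(x+1,y),(x,y+1)}"
  shows "toggle_minus S pz (a,b) (insert (x,y) J0) = toggle_minus S pz (a,b) J0"
    and "toggle_plus S pz (a,b) (insert (x,y) J0) = toggle_plus S pz (a,b) J0"
proof -
  have c1: "\<not> pz (a,b) (x,y)" if pJ: "(a,b) \<in> J0" and mx: "\<forall>r\<in>J0. pz (a,b) r \<longrightarrow> r = (a,b)"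
  proof
    assume le: "pz (a,b) (x,y)"
    have ne: "(a,b) \<noteq> (x,y)" using pn by auto
    from up[OF pS q(1) le ne]
    have "((a+1,b)\<in>S \<and> pz (a+1,b) (x,y)) \<or> ((a,b+1)\<in>S \<and> pz (a,b+1) (x,y))" .
    then show False
    proof
      assume h: "(a+1,b)\<in>S \<and> pz (a+1,b) (x,y)"
      have "(a+1,b) \<noteq> (x,y)" using pn by auto
      then have "(a+1,b) \<in> J0" using mn h by blast
      then show False using mx by auto
    next
      assume h: "(a,b+1)\<in>S \<and> pz (a,b+1) (x,y)"
      have "(a,b+1) \<noteq> (x,y)" using pn by auto
      then have "(a,b+1) \<in> J0" using mn h by blast
      then show False using mx by auto
    qed
  qed
  have ne: "(a,b) \<noteq> (x,y)" using pn by auto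
  have "((a,b) \<in> insert (x,y) J0 \<and> (\<forall>r\<in>insert (x,y) J0. pz (a,b) r \<longrightarrow> r = (a,b))) \<longleftrightarrow>
        ((a,b) \<in> J0 \<and> (\<forall>r\<in>J0. pz (a,b) r \<longrightarrow> r = (a,b)))" (is "?L \<longleftrightarrow> ?R")
  proof
    assume ?L then show ?R using ne by blast
  next
    assume R: ?R
    then have "\<not> pz (a,b) (x,y)" using c1 by blast
    then show ?L using R by blast
  qed
  then show "toggle_minus S pz (a,b) (insert (x,y) J0) = toggle_minus S pz (a,b) J0"
    unfolding toggle_minus_def by simp
  have c2: "\<not> pz (x,y) (a,b)" if pJ: "(a,b) \<in> S - J0" and mi: "\<forall>r\<in>S - insert (x,y) J0. pz r (a,b) \<longrightarrow> r = (a,b)"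
  proof
    assume le: "pz (x,y) (a,b)"
    from down[OF q(1) pS le ne[symmetric]]
    have "((a-1,b)\<in>S \<and> pz (x,y) (a-1,b)) \<or> ((a,b-1)\<in>S \<and> pz (x,y) (a,b-1))" .
    then show False
    proof
      assume h: "(a-1,b)\<in>S \<and> pz (x,y) (a-1,b)"
      have n1: "(a-1,b) \<noteq> (x,y)" using pn by auto
      have "(a-1,b) \<notin> J0"
      proof
        assume "(a-1,b) \<in> J0" then have "(x,y) \<in> J0" using J0dc h q by blast
        then show False using q by simp
      qed
      then have m: "(a-1,b) \<in> S - insert (x,y) J0" using h n1 by auto
      have "pz (a-1,b) (a,b)" by simp
      then have "(a-1,b) = (a,b)" using mi m by blast
      then show False by simp
    next
      assume h: "(a,b-1)\<in>S \<and> pz (x,y) (a,b-1)"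
      have n1: "(a,b-1) \<noteq> (x,y)" using pn by auto
      have "(a,b-1) \<notin> J0"
      proof
        assume "(a,b-1) \<in> J0" then have "(x,y) \<in> J0" using J0dc h q by blast
        then show False using q by simp
      qed
      then have m: "(a,b-1) \<in> S - insert (x,y) J0" using h n1 by auto
      have "pz (a,b-1) (a,b)" by simp
      then have "(a,b-1) = (a,b)" using mi m by blast
      then show False by simp
    qed
  qed
  have "((a,b) \<in> S - insert (x,y) J0 \<and> (\<forall>r\<in>S - insert (x,y) J0. pz r (a,b) \<longrightarrow> r = (a,b))) \<longleftrightarrow>
        ((a,b) \<in> S - J0 \<and> (\<forall>r\<in>S - J0. pz r (a,b) \<longrightarrow> r = (a,b)))" (is "?L \<longleftrightarrow> ?R")
  proof
    assume L: ?L
    have pJ: "(a,b) \<in> S - J0" using L by blast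
    have mi: "\<forall>r\<in>S - insert (x,y) J0. pz r (a,b) \<longrightarrow> r = (a,b)" using L by blast
    have "\<forall>r\<in>S - J0. pz r (a,b) \<longrightarrow> r = (a,b)"
    proof (intro ballI impI)
      fix r assume r: "r \<in> S - J0" "pz r (a,b)"
      show "r = (a,b)"
      proof (cases "r = (x,y)")
        case True then show ?thesis using c2[OF pJ mi] r by simp
      next
        case False then show ?thesis using mi r by blast
      qed
    qed
    then show ?R using pJ by blast
  next
    assume R: ?R then show ?L using ne by blast
  qed
  then show "toggle_plus S pz (a,b) (insert (x,y) J0) = toggle_plus S pz (a,b) J0"
    unfolding toggle_plus_def by simp
qed

lemma delta:
  assumes fin: "finite S"
  shows "Fsum S pz c (insert (x,y) J0) - Fsum S pz c J0 = Lx S c x y ((x-1,y+1) \<in> J0) ((x+1,y-1) \<in> J0)"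
proof -
  define I where "I = insert (x,y) J0"
  define d where "d p = ((1 + c p) * toggle_minus S pz p I - c p * toggle_plus S pz p I)
     - ((1 + c p) * toggle_minus S pz p J0 - c p * toggle_plus S pz p J0)" for p
  define N where "N = {(x,y),(x-1,y),(x,y-1),(x+1,y),(x,y+1)}"
  have "Fsum S pz c I - Fsum S pz c J0 = sum d S"
    unfolding Fsum_def d_def by (simp add: sum_subtractf)
  also have "\<dots> = sum d (S \<inter> N)"
  proof -
    have zero: "\<forall>p\<in>S - S \<inter> N. d p = 0"
    proof
      fix p assume p: "p \<in> S - S \<inter> N"
      obtain a b where ab: "p = (a,b)" by (cases p)
      have "(a,b) \<in> S" "(a,b) \<notin> N" using p ab by auto
      then show "d p = 0" unfolding d_def I_def ab N_def using tog_other by simp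
    qed
    have "S \<inter> N \<subseteq> S" by blast
    from sum.mono_neutral_right[OF fin this zero] show ?thesis .
  qed
  also have "\<dots> = (\<Sum>p\<in>N. if p \<in> S then d p else 0)"
    using sum.inter_restrict[of N d S] by (simp add: N_def Int_commute)
  also have "\<dots> = (if (x,y) \<in> S then d (x,y) else 0) + (if (x-1,y) \<in> S then d (x-1,y) else 0)
     + (if (x,y-1) \<in> S then d (x,y-1) else 0) + (if (x+1,y) \<in> S then d (x+1,y) else 0)
     + (if (x,y+1) \<in> S then d (x,y+1) else 0)"
    unfolding N_def by (simp add: add.assoc)
  also have "(if (x,y) \<in> S then d (x,y) else 0) = 1 + 2 * c (x,y)"
    using q unfolding d_def I_def by (simp add: tm_q tp_q tm_q0 tp_q0)
  also have "(if (x-1,y) \<in> S then d (x-1,y) else 0) = - (if (x-1,y) \<in> S \<and> \<not> (x-1,y+1) \<in> J0 then 1 + c (x-1,y) else 0)"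
    unfolding d_def I_def by (auto simp: tm_left)
  also have "(if (x,y-1) \<in> S then d (x,y-1) else 0) = - (if (x,y-1) \<in> S \<and> \<not> (x+1,y-1) \<in> J0 then 1 + c (x,y-1) else 0)"
    unfolding d_def I_def by (auto simp: tm_low)
  also have "(if (x+1,y) \<in> S then d (x+1,y) else 0) = - (if (x+1,y) \<in> S \<and> ((x+1,y-1) \<in> J0 \<or> (x+1,y-1) \<notin> S) then c (x+1,y) else 0)"
    unfolding d_def I_def by (auto simp: tm_right)
  also have "(if (x,y+1) \<in> S then d (x,y+1) else 0) = - (if (x,y+1) \<in> S \<and> ((x-1,y+1) \<in> J0 \<or> (x-1,y+1) \<notin> S) then c (x,y+1) else 0)"
    unfolding d_def I_def by (auto simp: tm_upper)
  finally show ?thesis unfolding I_def Lx_def by simp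
qed

end

lemma grid_main:
  assumes fin: "finite S" and m: "m \<in> S" "\<forall>p\<in>S. pz m p"
    and loc: "\<And>x y u v. (x,y) \<in> S \<Longrightarrow> (u \<Longrightarrow> (x-1,y+1) \<in> S) \<Longrightarrow> (v \<Longrightarrow> (x+1,y-1) \<in> S) \<Longrightarrow> Lx S c x y u v = 0"
  shows "\<forall>I\<in>order_ideals S pz. Fsum S pz c I = - c m"
proof -
  have base: "Fsum S pz c {} = - c m"
  proof -
    have tm0: "toggle_minus S pz p {} = 0" for p unfolding toggle_minus_def by simp
    have tp0: "toggle_plus S pz p {} = (if p = m then 1 else 0)" if p: "p \<in> S" for p
    proof (cases "p = m")
      case True
      have "\<forall>r\<in>S. pz r p \<longrightarrow> r = p"
      proof (intro ballI impI)
        fix r assume r: "r \<in> S" "pz r p"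
        have "pz m r" using m r by blast
        then show "r = p" using r True unfolding pz_def by (cases r, cases m) auto
      qed
      then show ?thesis unfolding toggle_plus_def using p True by simp
    next
      case False
      have "\<not> (\<forall>r\<in>S. pz r p \<longrightarrow> r = p)" using m p False by blast
      then show ?thesis unfolding toggle_plus_def using False by simp
    qed
    have "Fsum S pz c {} = (\<Sum>p\<in>S. if p = m then - c m else 0)"
      unfolding Fsum_def by (rule sum.cong) (auto simp: tm0 tp0)
    also have "\<dots> = - c m" using fin m by simp
    finally show ?thesis .
  qed
  have "\<forall>I. I \<in> order_ideals S pz \<longrightarrow> card I = n \<longrightarrow> Fsum S pz c I = - c m" for n
  proof (induction n)
    case 0
    show ?case
    proof (intro allI impI)
      fix I assume I: "I \<in> order_ideals S pz" "card I = 0"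
      have "finite I" using ideal_sub[OF I(1)] fin finite_subset by blast
      then have "I = {}" using I by simp
      then show "Fsum S pz c I = - c m" using base by simp
    qed
  next
    case (Suc n)
    show ?case
    proof (intro allI impI)
      fix I assume I: "I \<in> order_ideals S pz" "card I = Suc n"
      have IS: "I \<subseteq> S" using I(1) by (rule ideal_sub)
      have fI: "finite I" using IS fin finite_subset by blast
      have ne: "I \<noteq> {}" using I by auto
      obtain q where q: "q \<in> I" "\<forall>r\<in>I. pz q r \<longrightarrow> r = q"
        using max_exists[OF fI ne is_poset_pz IS] by blast
      obtain x y where xy: "q = (x,y)" by (cases q)
      define J0 where "J0 = I - {(x,y)}"
      have J0: "J0 \<in> order_ideals S pz" unfolding J0_def using ideal_remove_max[OF I(1)] q xy by simp
      have cJ0: "card J0 = n" unfolding J0_def using I(2) q xy fI by simp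
      have IH: "Fsum S pz c J0 = - c m" using Suc.IH J0 cJ0 by blast
      have qS: "(x,y) \<in> S" "(x,y) \<notin> J0" using q xy IS unfolding J0_def by auto
      have mn: "\<And>s. s \<in> S \<Longrightarrow> pz s (x,y) \<Longrightarrow> s \<noteq> (x,y) \<Longrightarrow> s \<in> J0"
        using I(1) q xy unfolding J0_def order_ideals_def by blast
      have ins: "insert (x,y) J0 = I" unfolding J0_def using q xy by auto
      have "Fsum S pz c I - Fsum S pz c J0 = Lx S c x y ((x-1,y+1) \<in> J0) ((x+1,y-1) \<in> J0)"
        using delta[OF J0 qS mn fin] ins by simp
      also have "\<dots> = 0"
        using loc[OF qS(1)] ideal_sub[OF J0] by blast
      finally show "Fsum S pz c I = - c m" using IH by simp
    qed
  qed
  then show ?thesis by blast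
qed

end

lemma Phi_grid:
  fixes S :: "(int \<times> int) set" and c :: "int \<times> int \<Rightarrow> real"
  assumes up: "\<And>a b a' b'. (a,b)\<in>S \<Longrightarrow> (a',b')\<in>S \<Longrightarrow> pz (a,b) (a',b') \<Longrightarrow> (a,b) \<noteq> (a',b') \<Longrightarrow>
      ((a+1,b)\<in>S \<and> pz (a+1,b) (a',b')) \<or> ((a,b+1)\<in>S \<and> pz (a,b+1) (a',b'))"
  and down: "\<And>a b a' b'. (a,b)\<in>S \<Longrightarrow> (a',b')\<in>S \<Longrightarrow> pz (a,b) (a',b') \<Longrightarrow> (a,b) \<noteq> (a',b') \<Longrightarrow>
      ((a'-1,b')\<in>S \<and> pz (a,b) (a'-1,b')) \<or> ((a',b'-1)\<in>S \<and> pz (a,b) (a',b'-1))"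
  and fin: "finite S" and m: "m \<in> S" "\<forall>p\<in>S. pz m p"
  and loc: "\<And>x y u v. (x,y) \<in> S \<Longrightarrow> (u \<Longrightarrow> (x-1,y+1) \<in> S) \<Longrightarrow> (v \<Longrightarrow> (x+1,y-1) \<in> S) \<Longrightarrow> Lx S c x y u v = 0"
  shows "Phi S pz"
  using grid_main[OF up down fin m loc] unfolding Phi_def by blast




lemma absA:
  fixes \<alpha> \<beta> c0 cl cd cr cu :: real
  assumes "\<alpha> + \<beta> = 1" "cl = c0 - \<alpha>" "cd = c0 - \<beta>" "cr = c0 + \<alpha>" "cu = c0 + \<beta>"
    "\<not> R \<and> \<not> D \<longrightarrow> c0 = - \<alpha>" "\<not> L \<and> \<not> U \<longrightarrow> c0 = - \<beta>" "u \<longrightarrow> L \<and> U" "v \<longrightarrow> R \<and> D"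
  shows "1 + 2 * c0 - (if L \<and> \<not> u then 1 + cl else 0) - (if D \<and> \<not> v then 1 + cd else 0)
     - (if R \<and> (v \<or> \<not> (R \<and> D)) then cr else 0) - (if U \<and> (u \<or> \<not> (L \<and> U)) then cu else 0) = 0"
  using assms by (cases L; cases D; cases R; cases U; cases u; cases v) simp_all

definition cA :: "nat \<Rightarrow> nat \<Rightarrow> int \<times> int \<Rightarrow> real" where
  "cA a b p = (real b * of_int (fst p) + real a * of_int (snd p) - real a - real b - real a * real b) / (real a + real b)"

lemma locA:
  assumes ab: "1 \<le> a" "1 \<le> b"
    and q: "(x,y) \<in> {1..int a} \<times> {1..int b}"
    and u: "u \<Longrightarrow> (x-1,y+1) \<in> {1..int a} \<times> {1..int b}"
    and v: "v \<Longrightarrow> (x+1,y-1) \<in> {1..int a} \<times> {1..int b}"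
  shows "Lx ({1..int a} \<times> {1..int b}) (cA a b) x y u v = 0"
proof -
  let ?S = "{1..int a} \<times> {1..int b}"
  let ?A = "real a" and ?B = "real b"
  have pos: "?A + ?B > 0" using ab by simp
  define c0 where "c0 = cA a b (x,y)"
  have m1: "(x+1,y-1) \<in> ?S \<longleftrightarrow> (x+1,y) \<in> ?S \<and> (x,y-1) \<in> ?S" using q by auto
  have m2: "(x-1,y+1) \<in> ?S \<longleftrightarrow> (x-1,y) \<in> ?S \<and> (x,y+1) \<in> ?S" using q by auto
  have cl: "cA a b (x-1,y) = c0 - ?B / (?A + ?B)" unfolding c0_def cA_def
    by (simp add: diff_divide_distrib[symmetric] algebra_simps)
  have cd: "cA a b (x,y-1) = c0 - ?A / (?A + ?B)" unfolding c0_def cA_def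
    by (simp add: diff_divide_distrib[symmetric] algebra_simps)
  have cr: "cA a b (x+1,y) = c0 + ?B / (?A + ?B)" unfolding c0_def cA_def
    by (simp add: add_divide_distrib[symmetric] algebra_simps)
  have cu: "cA a b (x,y+1) = c0 + ?A / (?A + ?B)" unfolding c0_def cA_def
    by (simp add: add_divide_distrib[symmetric] algebra_simps)
  have s: "?B / (?A + ?B) + ?A / (?A + ?B) = 1" using pos by (simp add: add_divide_distrib[symmetric])
  have b1: "c0 = - (?B / (?A + ?B))" if "\<not> (x+1,y) \<in> ?S \<and> \<not> (x,y-1) \<in> ?S"
  proof -
    have "x = int a" "y = 1" using that q by auto
    then show ?thesis unfolding c0_def cA_def using pos by (simp add: field_simps)
  qed
  have b2: "c0 = - (?A / (?A + ?B))" if "\<not> (x-1,y) \<in> ?S \<and> \<not> (x,y+1) \<in> ?S"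
  proof -
    have "x = 1" "y = int b" using that q by auto
    then show ?thesis unfolding c0_def cA_def using pos by (simp add: field_simps)
  qed
  show ?thesis unfolding Lx_def m1 m2 cl cd cr cu c0_def[symmetric]
    by (rule absA[OF s refl refl refl refl]) (use b1 b2 u v m1 m2 in auto)
qed

lemma Phi_A:
  assumes ab: "1 \<le> a" "1 \<le> b"
  shows "Phi ({1..int a} \<times> {1..int b}) pz"
proof (rule Phi_grid[where c="cA a b" and m="(1,1)"])
  fix x y u v
  assume "(x,y) \<in> {1..int a} \<times> {1..int b}" "u \<Longrightarrow> (x-1,y+1) \<in> {1..int a} \<times> {1..int b}"
    "v \<Longrightarrow> (x+1,y-1) \<in> {1..int a} \<times> {1..int b}"
  then show "Lx ({1..int a} \<times> {1..int b}) (cA a b) x y u v = 0" using locA[OF ab] by blast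
qed (use ab in auto)

lemma chain_prod_iso: "order_iso (chain_prod a b) prod_le ({1..int a} \<times> {1..int b}) pz (\<lambda>(i,j). (int i, int j))"
proof -
  have "(\<lambda>(i,j). (int i, int j)) ` chain_prod a b = {1..int a} \<times> {1..int b}"
  proof
    show "(\<lambda>(i,j). (int i, int j)) ` chain_prod a b \<subseteq> {1..int a} \<times> {1..int b}"
      unfolding chain_prod_def by auto
    show "{1..int a} \<times> {1..int b} \<subseteq> (\<lambda>(i,j). (int i, int j)) ` chain_prod a b"
    proof
      fix p assume p: "p \<in> {1..int a} \<times> {1..int b}"
      obtain x y where xy: "p = (x,y)" by (cases p)
      have "(nat x, nat y) \<in> chain_prod a b" using p xy unfolding chain_prod_def by auto
      moreover have "p = (\<lambda>(i,j). (int i, int j)) (nat x, nat y)" using p xy by auto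
      ultimately show "p \<in> (\<lambda>(i,j). (int i, int j)) ` chain_prod a b" by blast
    qed
  qed
  moreover have "inj_on (\<lambda>(i,j). (int i, int j)) (chain_prod a b)" unfolding inj_on_def by auto
  ultimately show ?thesis unfolding order_iso_def bij_betw_def prod_le_def by auto
qed

lemma Phi_chain_prod: "1 \<le> a \<Longrightarrow> 1 \<le> b \<Longrightarrow> Phi (chain_prod a b) prod_le"
  using Phi_iso[OF chain_prod_iso Phi_A] by blast




definition Tri :: "nat \<Rightarrow> (int \<times> int) set" where
  "Tri b = {p. 0 \<le> snd p \<and> snd p \<le> fst p \<and> fst p \<le> int b}"

definition cB :: "nat \<Rightarrow> int \<times> int \<Rightarrow> real" where
  "cB b p = (if fst p = snd p then (2 * of_int (fst p) - real b - 2) / 4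
             else (of_int (fst p) + of_int (snd p) - real b - 1) / 2)"

lemma locB:
  assumes q: "(x,y) \<in> Tri b"
    and u: "u \<Longrightarrow> (x-1,y+1) \<in> Tri b"
    and v: "v \<Longrightarrow> (x+1,y-1) \<in> Tri b"
  shows "Lx (Tri b) (cB b) x y u v = 0"
proof -
  have q': "0 \<le> y" "y \<le> x" "x \<le> int b" using q unfolding Tri_def by auto
  have u': "u \<Longrightarrow> y + 1 \<le> x - 1" using u unfolding Tri_def by auto
  have v': "v \<Longrightarrow> 1 \<le> y \<and> x + 1 \<le> int b" using v unfolding Tri_def by auto
  show ?thesis
    using q' u' v' unfolding Lx_def cB_def Tri_def
    by (auto split: if_split; simp add: field_simps; linarith)
qed

lemma Phi_Tri: "Phi (Tri b) pz"
proof (rule Phi_grid[where c="cB b" and m="(0,0)"])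
  fix x y u v
  assume "(x,y) \<in> Tri b" "u \<Longrightarrow> (x-1,y+1) \<in> Tri b" "v \<Longrightarrow> (x+1,y-1) \<in> Tri b"
  then show "Lx (Tri b) (cB b) x y u v = 0" by (rule locB)
next
  show "finite (Tri b)"
    by (rule finite_subset[of _ "{0..int b} \<times> {0..int b}"]) (auto simp: Tri_def)
qed (auto simp: Tri_def)

lemma part_simps[simp]:
  "part [] i = 0"
  "part [k] i = (if i = 0 then k else 0)"
  "part [k,l] i = (if i = 0 then k else if i = 1 then l else 0)"
  unfolding part_def by (cases i; auto simp: nth_Cons split: nat.splits)+

lemma yi_char:
  "\<nu> \<in> young_interval b \<longleftrightarrow> \<nu> = [] \<or> (\<exists>k. \<nu> = [k] \<and> 1 \<le> k \<and> k \<le> b) \<or> (\<exists>k l. \<nu> = [k,l] \<and> 1 \<le> l \<and> l \<le> k \<and> k \<le> b)"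
proof
  assume h: "\<nu> \<in> young_interval b"
  then have ip: "is_partition \<nu>" and yl: "\<forall>i. part \<nu> i \<le> part [b,b] i"
    unfolding young_interval_def young_le_def by auto
  show "\<nu> = [] \<or> (\<exists>k. \<nu> = [k] \<and> 1 \<le> k \<and> k \<le> b) \<or> (\<exists>k l. \<nu> = [k,l] \<and> 1 \<le> l \<and> l \<le> k \<and> k \<le> b)"
  proof (cases \<nu>)
    case Nil then show ?thesis by simp
  next
    case (Cons k r)
    note kr = Cons
    show ?thesis
    proof (cases r)
      case Nil
      have "1 \<le> k" using ip kr Nil unfolding is_partition_def by (cases k) auto
      moreover have "k \<le> b" using yl[rule_format, of 0] kr Nil by simp
      ultimately show ?thesis using kr Nil by simp
    next
      case (Cons l r2)
      show ?thesis
      proof (cases r2)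
        case Nil
        have "1 \<le> l" using ip kr Cons Nil unfolding is_partition_def by (cases l) auto
        moreover have "l \<le> k" using ip kr Cons Nil unfolding is_partition_def by simp
        moreover have "k \<le> b" using yl[rule_format, of 0] kr Cons Nil by simp
        ultimately show ?thesis using kr Cons Nil by simp
      next
        case (Cons m r3)
        have "0 < m" using ip kr \<open>r = l # r2\<close> Cons unfolding is_partition_def by (cases m) auto
        moreover have "part \<nu> 2 = m" using kr \<open>r = l # r2\<close> Cons unfolding part_def by simp
        moreover have "part [b,b] 2 = 0" by simp
        ultimately show ?thesis using yl[rule_format, of 2] by simp
      qed
    qed
  qed
next
  assume h: "\<nu> = [] \<or> (\<exists>k. \<nu> = [k] \<and> 1 \<le> k \<and> k \<le> b) \<or> (\<exists>k l. \<nu> = [k,l] \<and> 1 \<le> l \<and> l \<le> k \<and> k \<le> b)"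
  then show "\<nu> \<in> young_interval b"
    unfolding young_interval_def young_le_def is_partition_def by auto
qed

definition gB :: "nat list \<Rightarrow> int \<times> int" where
  "gB \<nu> = (int (part \<nu> 0), int (part \<nu> 1))"

lemma young_iso: "order_iso (young_interval b) young_le (Tri b) pz gB"
proof -
  have img: "gB ` young_interval b = Tri b"
  proof
    show "gB ` young_interval b \<subseteq> Tri b"
      unfolding Tri_def gB_def using yi_char by fastforce
    show "Tri b \<subseteq> gB ` young_interval b"
    proof
      fix p assume p: "p \<in> Tri b"
      obtain x y where xy: "p = (x,y)" by (cases p)
      have c: "0 \<le> y" "y \<le> x" "x \<le> int b" using p xy unfolding Tri_def by auto
      show "p \<in> gB ` young_interval b"
      proof (cases "x = 0")
        case True
        then have "p = gB []" using xy c by (simp add: gB_def)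
        moreover have "[] \<in> young_interval b" using yi_char by simp
        ultimately show ?thesis by blast
      next
        case x0: False
        show ?thesis
        proof (cases "y = 0")
          case True
          then have "p = gB [nat x]" using xy c x0 by (simp add: gB_def)
          moreover have "1 \<le> nat x" "nat x \<le> b" using c x0 by auto
          then have "[nat x] \<in> young_interval b" using yi_char by simp
          ultimately show ?thesis by blast
        next
          case False
          then have "p = gB [nat x, nat y]" using xy c x0 by (simp add: gB_def)
          moreover have "[nat x, nat y] \<in> young_interval b" using yi_char c x0 False by auto
          ultimately show ?thesis by blast
        qed
      qed
    qed
  qed
  have inj: "inj_on gB (young_interval b)"
    unfolding inj_on_def gB_def by (auto simp: yi_char)
  have le2: "part \<nu> i = 0" if "\<nu> \<in> young_interval b" "2 \<le> i" for \<nu> i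
    using that yi_char by auto
  have ord: "young_le \<nu> \<kappa> \<longleftrightarrow> pz (gB \<nu>) (gB \<kappa>)" if "\<nu> \<in> young_interval b" "\<kappa> \<in> young_interval b" for \<nu> \<kappa>
  proof
    assume "young_le \<nu> \<kappa>" then show "pz (gB \<nu>) (gB \<kappa>)" unfolding young_le_def gB_def by simp
  next
    assume h: "pz (gB \<nu>) (gB \<kappa>)"
    show "young_le \<nu> \<kappa>" unfolding young_le_def
    proof
      fix i show "part \<nu> i \<le> part \<kappa> i"
      proof (cases "i < 2")
        case True
        then have "i = 0 \<or> i = 1" by auto
        then show ?thesis using h unfolding gB_def by auto
      next
        case False then show ?thesis using le2[OF that(1)] by simp
      qed
    qed
  qed
  show ?thesis unfolding order_iso_def bij_betw_def using img inj ord by blast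
qed

lemma Phi_young: "Phi (young_interval b) young_le"
  using Phi_iso[OF young_iso Phi_Tri] .




definition Spaa :: "nat \<Rightarrow> (int \<times> int) set" where
  "Spaa a = {p. (1 \<le> fst p \<and> fst p \<le> int a + 1 \<and> snd p = 0) \<or> (fst p = int a \<and> snd p = 1)
                 \<or> (fst p = int a + 1 \<and> 1 \<le> snd p \<and> snd p \<le> int a)}"

definition cC :: "nat \<Rightarrow> int \<times> int \<Rightarrow> real" where
  "cC a p = (if snd p = 0 \<and> fst p \<le> int a then -1
             else if (fst p = int a + 1 \<and> snd p = 0) \<or> (fst p = int a \<and> snd p = 1) then -1/2 else 0)"

lemma locC:
  assumes a: "1 \<le> a" and q: "(x,y) \<in> Spaa a"
    and u: "u \<Longrightarrow> (x-1,y+1) \<in> Spaa a"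
    and v: "v \<Longrightarrow> (x+1,y-1) \<in> Spaa a"
  shows "Lx (Spaa a) (cC a) x y u v = 0"
proof -
  have "(y = 0 \<and> 1 \<le> x \<and> x \<le> int a) \<or> (x = int a+1 \<and> y = 0) \<or> (x = int a \<and> y = 1) \<or> (x = int a + 1 \<and> 1 \<le> y \<and> y \<le> int a)"
    using q unfolding Spaa_def by auto
  then show ?thesis
  proof (elim disjE)
    assume h: "y = 0 \<and> 1 \<le> x \<and> x \<le> int a"
    have nu: "\<not> u" using u h unfolding Spaa_def by auto
    have nv: "\<not> v" using v h unfolding Spaa_def by auto
    show ?thesis
    proof (cases "x = int a")
      case True
      then show ?thesis using h nu nv a unfolding Lx_def cC_def Spaa_def by simp
    next
      case False
      then show ?thesis using h nu nv a unfolding Lx_def cC_def Spaa_def by simp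
    qed
  next
    assume h: "x = int a+1 \<and> y = 0"
    have nv: "\<not> v" using v h unfolding Spaa_def by auto
    show ?thesis using h nv a unfolding Lx_def cC_def Spaa_def by simp
  next
    assume h: "x = int a \<and> y = 1"
    have nu: "\<not> u" using u h unfolding Spaa_def by auto
    show ?thesis using h nu a unfolding Lx_def cC_def Spaa_def by simp
  next
    assume h: "x = int a + 1 \<and> 1 \<le> y \<and> y \<le> int a"
    have nu: "\<not> u" using u h unfolding Spaa_def by auto
    have nv: "\<not> v" using v h unfolding Spaa_def by auto
    show ?thesis
    proof (cases "y = 1")
      case True
      then show ?thesis using h nu nv a unfolding Lx_def cC_def Spaa_def by simp
    next
      case False
      then show ?thesis using h nu nv a unfolding Lx_def cC_def Spaa_def by simp
    qed
  qed
qed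

lemma Spaa_mem: "(x,y) \<in> Spaa a \<longleftrightarrow> (y = 0 \<and> 1 \<le> x \<and> x \<le> int a + 1) \<or> (x = int a \<and> y = 1) \<or> (x = int a + 1 \<and> 1 \<le> y \<and> y \<le> int a)"
  unfolding Spaa_def by auto

lemma Spaa_down:
  assumes a: "1 \<le> a" and h: "(x,y)\<in>Spaa a" "(x',y')\<in>Spaa a" "pz (x,y) (x',y')" "(x,y) \<noteq> (x',y')"
  shows "((x'-1,y')\<in>Spaa a \<and> pz (x,y) (x'-1,y')) \<or> ((x',y'-1)\<in>Spaa a \<and> pz (x,y) (x',y'-1))"
proof -
  have "(y' = 0 \<and> 1 \<le> x' \<and> x' \<le> int a + 1) \<or> (x' = int a \<and> y' = 1) \<or> (x' = int a + 1 \<and> 1 \<le> y' \<and> y' \<le> int a)"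
    using h(2) unfolding Spaa_mem .
  then show ?thesis
  proof (elim disjE)
  assume "y' = 0 \<and> 1 \<le> x' \<and> x' \<le> int a + 1"
  then show ?thesis using h a unfolding Spaa_mem by auto
next
  assume "x' = int a \<and> y' = 1"
  then show ?thesis using h a unfolding Spaa_mem by auto
next
  assume "x' = int a + 1 \<and> 1 \<le> y' \<and> y' \<le> int a"
  then show ?thesis using h a unfolding Spaa_mem by auto
qed
qed

lemma Spaa_up:
  assumes a: "1 \<le> a" and h: "(x,y)\<in>Spaa a" "(x',y')\<in>Spaa a" "pz (x,y) (x',y')" "(x,y) \<noteq> (x',y')"
  shows "((x+1,y)\<in>Spaa a \<and> pz (x+1,y) (x',y')) \<or> ((x,y+1)\<in>Spaa a \<and> pz (x,y+1) (x',y'))"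
proof -
  have "(y = 0 \<and> 1 \<le> x \<and> x \<le> int a + 1) \<or> (x = int a \<and> y = 1) \<or> (x = int a + 1 \<and> 1 \<le> y \<and> y \<le> int a)"
    using h(1) unfolding Spaa_mem .
  then show ?thesis
  proof (elim disjE)
  assume "y = 0 \<and> 1 \<le> x \<and> x \<le> int a + 1"
  then show ?thesis using h a unfolding Spaa_mem by auto
next
  assume "x = int a \<and> y = 1"
  then show ?thesis using h a unfolding Spaa_mem by auto
next
  assume "x = int a + 1 \<and> 1 \<le> y \<and> y \<le> int a"
  then show ?thesis using h a unfolding Spaa_mem by auto
qed
qed

lemma Phi_Spaa: assumes a: "1 \<le> a" shows "Phi (Spaa a) pz"
proof (rule Phi_grid[where c="cC a" and m="(1,0)"])
  fix x y u v
  assume "(x,y) \<in> Spaa a" "u \<Longrightarrow> (x-1,y+1) \<in> Spaa a" "v \<Longrightarrow> (x+1,y-1) \<in> Spaa a"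
  then show "Lx (Spaa a) (cC a) x y u v = 0" by (rule locC[OF a])
next
  show "finite (Spaa a)"
    by (rule finite_subset[of _ "{0..int a+1} \<times> {0..int a}"]) (use a in \<open>auto simp: Spaa_def\<close>)
next
  show "\<forall>p\<in>Spaa a. pz (1,0) p" using a by (auto simp: Spaa_def)
next
  fix x y x' y' assume "(x,y)\<in>Spaa a" "(x',y')\<in>Spaa a" "pz (x,y) (x',y')" "(x,y) \<noteq> (x',y')"
  then show "((x'-1,y')\<in>Spaa a \<and> pz (x,y) (x'-1,y')) \<or> ((x',y'-1)\<in>Spaa a \<and> pz (x,y) (x',y'-1))"
    using Spaa_down[OF a] by blast
next
  fix x y x' y' assume "(x,y)\<in>Spaa a" "(x',y')\<in>Spaa a" "pz (x,y) (x',y')" "(x,y) \<noteq> (x',y')"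
  then show "((x+1,y)\<in>Spaa a \<and> pz (x+1,y) (x',y')) \<or> ((x,y+1)\<in>Spaa a \<and> pz (x,y+1) (x',y'))"
    using Spaa_up[OF a] by blast
qed (auto simp: Spaa_def)

definition ePaa :: "nat \<Rightarrow> paa_elem \<Rightarrow> int \<times> int" where
  "ePaa a u = (case u of W i \<Rightarrow> (int i, 0) | X \<Rightarrow> (int a + 1, 0) | Y \<Rightarrow> (int a, 1) | Z k \<Rightarrow> (int a + 1, int k))"

lemma cover_mono: "paa_cover a u v \<Longrightarrow> pz (ePaa a u) (ePaa a v)"
  unfolding paa_cover_def ePaa_def by auto

lemma paa_le_mono: "paa_le a u v \<Longrightarrow> pz (ePaa a u) (ePaa a v)"
  unfolding paa_le_def
proof (induction rule: rtranclp_induct)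
  case base then show ?case unfolding pz_def by simp
next
  case (step y z)
  then show ?case using cover_mono[of a y z] unfolding pz_def by auto
qed

lemma W_chain: "1 \<le> i \<Longrightarrow> i \<le> j \<Longrightarrow> j \<le> a \<Longrightarrow> paa_le a (W i) (W j)"
proof (induction j)
  case 0 then show ?case by simp
next
  case (Suc j)
  show ?case
  proof (cases "i \<le> j")
    case True
    then have "paa_le a (W i) (W j)" using Suc by simp
    moreover have "paa_cover a (W j) (W (Suc j))" unfolding paa_cover_def using Suc True by auto
    ultimately show ?thesis unfolding paa_le_def by (rule rtranclp.rtrancl_into_rtrancl)
  next
    case False
    then have "i = Suc j" using Suc by simp
    then show ?thesis unfolding paa_le_def by simp
  qed
qed

lemma Z_chain: "1 \<le> i \<Longrightarrow> i \<le> j \<Longrightarrow> j \<le> a \<Longrightarrow> paa_le a (Z i) (Z j)"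
proof (induction j)
  case 0 then show ?case by simp
next
  case (Suc j)
  show ?case
  proof (cases "i \<le> j")
    case True
    then have "paa_le a (Z i) (Z j)" using Suc by simp
    moreover have "paa_cover a (Z j) (Z (Suc j))" unfolding paa_cover_def using Suc True by auto
    ultimately show ?thesis unfolding paa_le_def by (rule rtranclp.rtrancl_into_rtrancl)
  next
    case False
    then have "i = Suc j" using Suc by simp
    then show ?thesis unfolding paa_le_def by simp
  qed
qed

lemma paa_trans: "paa_le a u v \<Longrightarrow> paa_le a v w \<Longrightarrow> paa_le a u w"
  unfolding paa_le_def by (rule rtranclp_trans)

lemma paa_cov: "paa_cover a u v \<Longrightarrow> paa_le a u v"
  unfolding paa_le_def by (rule r_into_rtranclp)

lemma paa_le_refl: "paa_le a u u"
  unfolding paa_le_def by simp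

lemma W_X: "1 \<le> i \<Longrightarrow> i \<le> a \<Longrightarrow> paa_le a (W i) X"
  using paa_trans[OF W_chain[of i a a] paa_cov[of a "W a" X]] by (auto simp: paa_cover_def)

lemma W_Y: "1 \<le> i \<Longrightarrow> i \<le> a \<Longrightarrow> paa_le a (W i) Y"
  using paa_trans[OF W_chain[of i a a] paa_cov[of a "W a" Y]] by (auto simp: paa_cover_def)

lemma X_Z: "1 \<le> k \<Longrightarrow> k \<le> a \<Longrightarrow> paa_le a X (Z k)"
  using paa_trans[OF paa_cov[of a X "Z 1"] Z_chain[of 1 k a]] by (auto simp: paa_cover_def)

lemma Y_Z: "1 \<le> k \<Longrightarrow> k \<le> a \<Longrightarrow> paa_le a Y (Z k)"
  using paa_trans[OF paa_cov[of a Y "Z 1"] Z_chain[of 1 k a]] by (auto simp: paa_cover_def)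

lemma W_Z: "1 \<le> i \<Longrightarrow> i \<le> a \<Longrightarrow> 1 \<le> k \<Longrightarrow> k \<le> a \<Longrightarrow> paa_le a (W i) (Z k)"
  using paa_trans[OF W_X X_Z] by blast

lemma paa_mem: "u \<in> paa_carrier a \<longleftrightarrow> (\<exists>i. u = W i \<and> 1 \<le> i \<and> i \<le> a) \<or> u = X \<or> u = Y \<or> (\<exists>i. u = Z i \<and> 1 \<le> i \<and> i \<le> a)"
  unfolding paa_carrier_def by auto

lemma paa_le_iff:
  assumes u: "u \<in> paa_carrier a" and v: "v \<in> paa_carrier a"
  shows "paa_le a u v \<longleftrightarrow> pz (ePaa a u) (ePaa a v)"
proof
  assume "paa_le a u v" then show "pz (ePaa a u) (ePaa a v)" by (rule paa_le_mono)
next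
  assume h: "pz (ePaa a u) (ePaa a v)"
  show "paa_le a u v"
  proof (cases u)
    case (W i)
    then have i: "1 \<le> i" "i \<le> a" using u paa_mem by auto
    show ?thesis
    proof (cases v)
      case (W j) then show ?thesis using h i \<open>u = W i\<close> v paa_mem W_chain by (auto simp: ePaa_def)
    next
      case X then show ?thesis using i \<open>u = W i\<close> W_X by simp
    next
      case Y then show ?thesis using i \<open>u = W i\<close> W_Y by simp
    next
      case (Z k) then show ?thesis using i \<open>u = W i\<close> v paa_mem W_Z by auto
    qed
  next
    case X
    show ?thesis
    proof (cases v)
      case (W j) then show ?thesis using h X v paa_mem by (auto simp: ePaa_def)
    next
      case X then show ?thesis using \<open>u = X\<close> paa_le_refl by simp
    next
      case Y then show ?thesis using h X by (auto simp: ePaa_def)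
    next
      case (Z k) then show ?thesis using X v paa_mem X_Z by auto
    qed
  next
    case Y
    show ?thesis
    proof (cases v)
      case (W j) then show ?thesis using h Y by (auto simp: ePaa_def)
    next
      case X then show ?thesis using h Y by (auto simp: ePaa_def)
    next
      case Y then show ?thesis using \<open>u = Y\<close> paa_le_refl by simp
    next
      case (Z k) then show ?thesis using Y v paa_mem Y_Z by auto
    qed
  next
    case (Z i)
    then have i: "1 \<le> i" "i \<le> a" using u paa_mem by auto
    show ?thesis
    proof (cases v)
      case (W j) then show ?thesis using h \<open>u = Z i\<close> v paa_mem by (auto simp: ePaa_def)
    next
      case X then show ?thesis using h i \<open>u = Z i\<close> by (auto simp: ePaa_def)
    next
      case Y then show ?thesis using h \<open>u = Z i\<close> by (auto simp: ePaa_def)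
    next
      case (Z k) then show ?thesis using h i \<open>u = Z i\<close> v paa_mem Z_chain by (auto simp: ePaa_def)
    qed
  qed
qed

lemma paa_iso: assumes a: "1 \<le> a" shows "order_iso (paa_carrier a) (paa_le a) (Spaa a) pz (ePaa a)"
proof -
  have inj: "inj_on (ePaa a) (paa_carrier a)"
  proof (rule inj_onI)
    fix u v assume "u \<in> paa_carrier a" "v \<in> paa_carrier a" "ePaa a u = ePaa a v"
    then show "u = v" unfolding paa_mem ePaa_def by auto
  qed
  have img: "ePaa a ` paa_carrier a = Spaa a"
  proof
    show "ePaa a ` paa_carrier a \<subseteq> Spaa a"
      unfolding Spaa_def ePaa_def paa_carrier_def using a by auto
    show "Spaa a \<subseteq> ePaa a ` paa_carrier a"
    proof
      fix p assume p: "p \<in> Spaa a"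
      obtain x y where xy: "p = (x,y)" by (cases p)
      have "(y = 0 \<and> 1 \<le> x \<and> x \<le> int a + 1) \<or> (x = int a \<and> y = 1) \<or> (x = int a + 1 \<and> 1 \<le> y \<and> y \<le> int a)"
        using p xy Spaa_mem by simp
      then show "p \<in> ePaa a ` paa_carrier a"
      proof (elim disjE)
        assume h: "y = 0 \<and> 1 \<le> x \<and> x \<le> int a + 1"
        show ?thesis
        proof (cases "x = int a + 1")
          case True
          then have "p = ePaa a X" using h xy by (simp add: ePaa_def)
          moreover have "X \<in> paa_carrier a" by (simp add: paa_mem)
          ultimately show ?thesis by blast
        next
          case False
          then have "p = ePaa a (W (nat x))" using h xy by (simp add: ePaa_def)
          moreover have "W (nat x) \<in> paa_carrier a" using h False by (simp add: paa_mem) linarith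
          ultimately show ?thesis by blast
        qed
      next
        assume h: "x = int a \<and> y = 1"
        then have "p = ePaa a Y" using xy by (simp add: ePaa_def)
        moreover have "Y \<in> paa_carrier a" by (simp add: paa_mem)
        ultimately show ?thesis by blast
      next
        assume h: "x = int a + 1 \<and> 1 \<le> y \<and> y \<le> int a"
        then have "p = ePaa a (Z (nat y))" using xy by (simp add: ePaa_def)
        moreover have "Z (nat y) \<in> paa_carrier a" using h by (simp add: paa_mem) linarith
        ultimately show ?thesis by blast
      qed
    qed
  qed
  show ?thesis unfolding order_iso_def bij_betw_def using inj img paa_le_iff by blast
qed

lemma Phi_paa: "1 \<le> a \<Longrightarrow> Phi (paa_carrier a) (paa_le a)"
  using Phi_iso[OF paa_iso Phi_Spaa] by blast




fun ideals_list :: "('a \<Rightarrow> 'a \<Rightarrow> bool) \<Rightarrow> 'a list \<Rightarrow> 'a set list" where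
  "ideals_list le [] = [{}]"
| "ideals_list le (x # xs) = (let L = ideals_list le xs in L @ [insert x I. I \<leftarrow> L, \<forall>y\<in>set xs. le y x \<longrightarrow> y \<in> I])"

fun rlin :: "('a \<Rightarrow> 'a \<Rightarrow> bool) \<Rightarrow> 'a list \<Rightarrow> bool" where
  "rlin le [] = True"
| "rlin le (x # xs) = (x \<notin> set xs \<and> (\<forall>z\<in>set xs. \<not> le x z) \<and> rlin le xs)"

lemma ideals_list_correct: "rlin le xs \<Longrightarrow> order_ideals (set xs) le = set (ideals_list le xs)"
proof (induction xs)
  case Nil
  show ?case unfolding order_ideals_def by auto
next
  case (Cons x xs)
  have xn: "x \<notin> set xs" and nle: "\<forall>z\<in>set xs. \<not> le x z" and rl: "rlin le xs" using Cons.prems by auto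
  have IH: "order_ideals (set xs) le = set (ideals_list le xs)" using Cons.IH rl by simp
  have rhs: "set (ideals_list le (x # xs)) = order_ideals (set xs) le \<union> {insert x I | I. I \<in> order_ideals (set xs) le \<and> (\<forall>y\<in>set xs. le y x \<longrightarrow> y \<in> I)}"
    by (auto simp: IH Let_def)
  show ?case unfolding rhs
  proof
    show "order_ideals (set (x # xs)) le \<subseteq> order_ideals (set xs) le \<union> {insert x I | I. I \<in> order_ideals (set xs) le \<and> (\<forall>y\<in>set xs. le y x \<longrightarrow> y \<in> I)}"
    proof
      fix J assume J: "J \<in> order_ideals (set (x # xs)) le"
      have JS: "J \<subseteq> set (x # xs)" and dc: "\<forall>w\<in>J. \<forall>y\<in>set (x # xs). le y w \<longrightarrow> y \<in> J"
        using J unfolding order_ideals_def by auto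
      show "J \<in> order_ideals (set xs) le \<union> {insert x I | I. I \<in> order_ideals (set xs) le \<and> (\<forall>y\<in>set xs. le y x \<longrightarrow> y \<in> I)}"
      proof (cases "x \<in> J")
        case False
        then have "J \<in> order_ideals (set xs) le" using JS dc unfolding order_ideals_def by auto
        then show ?thesis by blast
      next
        case True
        have "J - {x} \<in> order_ideals (set xs) le" using JS dc xn unfolding order_ideals_def by auto
        moreover have "\<forall>y\<in>set xs. le y x \<longrightarrow> y \<in> J - {x}" using dc True xn by auto
        moreover have "J = insert x (J - {x})" using True by auto
        ultimately show ?thesis by blast
      qed
    qed
    show "order_ideals (set xs) le \<union> {insert x I | I. I \<in> order_ideals (set xs) le \<and> (\<forall>y\<in>set xs. le y x \<longrightarrow> y \<in> I)} \<subseteq> order_ideals (set (x # xs)) le"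
    proof
      fix J assume J: "J \<in> order_ideals (set xs) le \<union> {insert x I | I. I \<in> order_ideals (set xs) le \<and> (\<forall>y\<in>set xs. le y x \<longrightarrow> y \<in> I)}"
      then show "J \<in> order_ideals (set (x # xs)) le"
      proof
        assume J: "J \<in> order_ideals (set xs) le"
        then show ?thesis using nle unfolding order_ideals_def by auto
      next
        assume "J \<in> {insert x I | I. I \<in> order_ideals (set xs) le \<and> (\<forall>y\<in>set xs. le y x \<longrightarrow> y \<in> I)}"
        then obtain I where I: "J = insert x I" "I \<in> order_ideals (set xs) le" "\<forall>y\<in>set xs. le y x \<longrightarrow> y \<in> I"
          by blast
        show ?thesis using I nle unfolding order_ideals_def by auto
      qed
    qed
  qed
qed

definition iso_check :: "('a \<Rightarrow> 'a \<Rightarrow> bool) \<Rightarrow> ('b \<Rightarrow> 'b \<Rightarrow> bool) \<Rightarrow> 'a list \<Rightarrow> 'b list \<Rightarrow> bool" where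
  "iso_check le le' xs ys \<longleftrightarrow> distinct xs \<and> distinct ys \<and> length xs = length ys \<and>
     list_all (\<lambda>i. list_all (\<lambda>j. le (xs ! i) (xs ! j) = le' (ys ! i) (ys ! j)) [0..<length xs]) [0..<length xs]"

definition lmap :: "'a list \<Rightarrow> 'b list \<Rightarrow> 'a \<Rightarrow> 'b" where
  "lmap xs ys x = ys ! (THE i. i < length xs \<and> xs ! i = x)"

lemma iso_check_iso:
  assumes "iso_check le le' xs ys"
  shows "order_iso (set xs) le (set ys) le' (lmap xs ys)"
proof -
  have dx: "distinct xs" and dy: "distinct ys" and len: "length xs = length ys"
    and ord: "\<And>i j. i < length xs \<Longrightarrow> j < length xs \<Longrightarrow> le (xs ! i) (xs ! j) = le' (ys ! i) (ys ! j)"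
    using assms unfolding iso_check_def list_all_iff by auto
  have g: "lmap xs ys (xs ! i) = ys ! i" if i: "i < length xs" for i
  proof -
    have "(THE k. k < length xs \<and> xs ! k = xs ! i) = i"
      by (rule the_equality) (use i dx nth_eq_iff_index_eq in auto)
    then show ?thesis unfolding lmap_def by simp
  qed
  have inj: "inj_on (lmap xs ys) (set xs)"
  proof (rule inj_onI)
    fix a b assume a: "a \<in> set xs" and b: "b \<in> set xs" and e: "lmap xs ys a = lmap xs ys b"
    obtain i where i: "i < length xs" "a = xs ! i" using a by (auto simp: in_set_conv_nth)
    obtain j where j: "j < length xs" "b = xs ! j" using b by (auto simp: in_set_conv_nth)
    have "ys ! i = ys ! j" using e g i j by simp
    then have "i = j" using dy i j len nth_eq_iff_index_eq by auto
    then show "a = b" using i j by simp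
  qed
  have img: "lmap xs ys ` set xs = set ys"
  proof
    show "lmap xs ys ` set xs \<subseteq> set ys"
    proof
      fix b assume "b \<in> lmap xs ys ` set xs"
      then obtain i where i: "i < length xs" "b = lmap xs ys (xs ! i)" by (auto simp: in_set_conv_nth)
      then show "b \<in> set ys" using g len by simp
    qed
    show "set ys \<subseteq> lmap xs ys ` set xs"
    proof
      fix b assume "b \<in> set ys"
      then obtain i where i: "i < length ys" "b = ys ! i" by (auto simp: in_set_conv_nth)
      then have "b = lmap xs ys (xs ! i)" using g len by simp
      moreover have "xs ! i \<in> set xs" using i len by simp
      ultimately show "b \<in> lmap xs ys ` set xs" by blast
    qed
  qed
  have "\<forall>a\<in>set xs. \<forall>b\<in>set xs. le a b \<longleftrightarrow> le' (lmap xs ys a) (lmap xs ys b)"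
  proof (intro ballI)
    fix a b assume a: "a \<in> set xs" and b: "b \<in> set xs"
    obtain i where i: "i < length xs" "a = xs ! i" using a by (auto simp: in_set_conv_nth)
    obtain j where j: "j < length xs" "b = xs ! j" using b by (auto simp: in_set_conv_nth)
    show "le a b \<longleftrightarrow> le' (lmap xs ys a) (lmap xs ys b)" using ord[OF i(1) j(1)] g i j by simp
  qed
  then show ?thesis unfolding order_iso_def bij_betw_def using inj img by blast
qed

definition LxI :: "(int \<times> int) set \<Rightarrow> (int \<times> int \<Rightarrow> int) \<Rightarrow> int \<Rightarrow> int \<Rightarrow> int \<Rightarrow> bool \<Rightarrow> bool \<Rightarrow> int" where
  "LxI S d D x y u v = D + 2 * d (x,y)
     - (if (x-1,y) \<in> S \<and> \<not> u then D + d (x-1,y) else 0)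
     - (if (x,y-1) \<in> S \<and> \<not> v then D + d (x,y-1) else 0)
     - (if (x+1,y) \<in> S \<and> (v \<or> (x+1,y-1) \<notin> S) then d (x+1,y) else 0)
     - (if (x,y+1) \<in> S \<and> (u \<or> (x-1,y+1) \<notin> S) then d (x,y+1) else 0)"

lemma Lx_LxI:
  assumes D: "D \<noteq> 0"
  shows "Lx S (\<lambda>p. of_int (d p) / of_int D) x y u v = of_int (LxI S d D x y u v) / of_int D"
proof -
  have e: "(if P then 1 + of_int k / of_int D else 0) = (of_int (if P then D + k else 0) :: real) / of_int D" for P k
    using D by (cases P) (simp_all add: field_simps)
  have e2: "(if P then of_int k / of_int D else 0) = (of_int (if P then k else 0) :: real) / of_int D" for P k
    by (cases P) simp_all
  have gen: "1 + 2 * (of_int a / of_int D) - of_int b1 / of_int D - of_int b2 / of_int D - of_int b3 / of_int D - of_int b4 / of_int D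
      = (of_int (D + 2 * a - b1 - b2 - b3 - b4) :: real) / of_int D" for a b1 b2 b3 b4
    using D by (simp add: field_simps)
  show ?thesis unfolding Lx_def e e2 gen LxI_def ..
qed

definition checkLoc :: "(int \<times> int) list \<Rightarrow> (int \<times> int \<Rightarrow> int) \<Rightarrow> int \<Rightarrow> bool" where
  "checkLoc S d D = list_all (\<lambda>(x,y). list_all (\<lambda>u. list_all (\<lambda>v.
      (u \<longrightarrow> (x-1,y+1) \<in> set S) \<longrightarrow> (v \<longrightarrow> (x+1,y-1) \<in> set S) \<longrightarrow> LxI (set S) d D x y u v = 0)
      [False, True]) [False, True]) S"

definition checkStep :: "(int \<times> int) list \<Rightarrow> bool" where
  "checkStep S = list_all (\<lambda>(a,b). list_all (\<lambda>(a',b'). pz (a,b) (a',b') \<and> (a,b) \<noteq> (a',b') \<longrightarrow>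
      (((a+1,b)\<in>set S \<and> pz (a+1,b) (a',b')) \<or> ((a,b+1)\<in>set S \<and> pz (a,b+1) (a',b'))) \<and>
      (((a'-1,b')\<in>set S \<and> pz (a,b) (a'-1,b')) \<or> ((a',b'-1)\<in>set S \<and> pz (a,b) (a',b'-1)))) S) S"

lemma Phi_check:
  assumes cl: "checkLoc S d D" and cs: "checkStep S" and D: "D \<noteq> 0"
    and m: "m \<in> set S" "list_all (pz m) S"
  shows "Phi (set S) pz"
proof (rule Phi_grid[where c="\<lambda>p. of_int (d p) / of_int D" and m=m])
  fix x y u v
  assume q: "(x,y) \<in> set S" and u: "u \<Longrightarrow> (x-1,y+1) \<in> set S" and v: "v \<Longrightarrow> (x+1,y-1) \<in> set S"
  have "LxI (set S) d D x y u v = 0"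
    using cl q u v unfolding checkLoc_def list_all_iff by (cases u; cases v) fastforce+
  then show "Lx (set S) (\<lambda>p. of_int (d p) / of_int D) x y u v = 0" using Lx_LxI[OF D] by simp
next
  fix a b a' b' assume "(a,b) \<in> set S" "(a',b') \<in> set S" "pz (a,b) (a',b')" "(a,b) \<noteq> (a',b')"
  then show "((a+1,b)\<in>set S \<and> pz (a+1,b) (a',b')) \<or> ((a,b+1)\<in>set S \<and> pz (a,b+1) (a',b'))"
    using cs unfolding checkStep_def list_all_iff by fastforce
next
  fix a b a' b' assume "(a,b) \<in> set S" "(a',b') \<in> set S" "pz (a,b) (a',b')" "(a,b) \<noteq> (a',b')"
  then show "((a'-1,b')\<in>set S \<and> pz (a,b) (a'-1,b')) \<or> ((a',b'-1)\<in>set S \<and> pz (a,b) (a',b'-1))"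
    using cs unfolding checkStep_def list_all_iff by fastforce
qed (use m in \<open>auto simp: list_all_iff\<close>)




definition D4 :: "(nat \<times> nat) list" where
  "D4 = [(4,4), (3,4), (2,4), (3,3), (1,4), (2,3), (1,3), (2,2), (1,2), (1,1)]"

lemma sd4: "shift_delta4 = set D4"
proof
  show "set D4 \<subseteq> shift_delta4" unfolding D4_def shift_delta4_def by auto
  show "shift_delta4 \<subseteq> set D4"
  proof
    fix p assume "p \<in> shift_delta4"
    then obtain i j where p: "p = (i,j)" "1 \<le> i" "i \<le> j" "j \<le> 4" unfolding shift_delta4_def by auto
    have "j = 1 \<or> j = 2 \<or> j = 3 \<or> j = 4" using p by auto
    moreover have "i = 1 \<or> i = 2 \<or> i = 3 \<or> i = 4" using p by auto
    ultimately show "p \<in> set D4" using p unfolding D4_def by auto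
  qed
qed

lemma rl6: "rlin prod_le D4" by code_simp

lemma PE6_eq: "PE6 = set (ideals_list prod_le D4)"
  unfolding PE6_def sd4 using ideals_list_correct[OF rl6] .

definition C6 :: "(int \<times> int) list" where
  "C6 = [(0,0), (1,0), (2,0), (3,0), (2,1), (3,1), (4,1), (2,2), (3,2), (4,2), (5,1), (5,2), (4,3), (5,3), (6,3), (7,3)]"

definition C6d :: "(int \<times> int) list" where
  "C6d = [(7,3), (6,3), (5,3), (4,3), (5,2), (4,2), (5,1), (3,2), (4,1), (2,2), (3,1), (2,1), (3,0), (2,0), (1,0), (0,0)]"

definition C7 :: "(int \<times> int) list" where
  "C7 = [(0,0), (1,0), (2,0), (3,0), (4,0), (3,1), (4,1), (5,1), (3,2), (4,2), (5,2), (6,1), (6,2), (5,3), (6,3), (7,1), (7,2), (7,3), (6,4), (7,4), (8,4), (6,5), (7,5), (8,5), (9,5), (10,5), (11,5)]"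

definition T6 :: "((int \<times> int) \<times> int) list" where
  "T6 = [((0,0),-4), ((1,0),-5), ((2,0),-6), ((3,0),-3), ((2,1),-4), ((3,1),-3), ((4,1),-2), ((2,2),-2), ((3,2),-1), ((4,2),0), ((5,1),-1), ((5,2),1), ((4,3),0), ((5,3),3), ((6,3),2), ((7,3),1)]"

definition T7 :: "((int \<times> int) \<times> int) list" where
  "T7 = [((0,0),-3), ((1,0),-4), ((2,0),-5), ((3,0),-6), ((4,0),-3), ((3,1),-4), ((4,1),-4), ((5,1),-3), ((3,2),-2), ((4,2),-2), ((5,2),-2), ((6,1),-2), ((6,2),-1), ((5,3),-1), ((6,3),0), ((7,1),-1), ((7,2),0), ((7,3),1), ((6,4),0), ((7,4),2), ((8,4),1), ((6,5),0), ((7,5),2), ((8,5),4), ((9,5),3), ((10,5),2), ((11,5),1)]"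

definition d6 :: "int \<times> int \<Rightarrow> int" where
  "d6 p = (case map_of T6 p of Some v \<Rightarrow> v | None \<Rightarrow> 0)"

definition d7 :: "int \<times> int \<Rightarrow> int" where
  "d7 p = (case map_of T7 p of Some v \<Rightarrow> v | None \<Rightarrow> 0)"

lemma iso6: "iso_check (\<subseteq>) pz (ideals_list prod_le D4) C6" by code_simp

lemma Phi_C6: "Phi (set C6) pz"
proof (rule Phi_check[where d=d6 and D=3 and m="(0,0)"])
  show "checkLoc C6 d6 3" by code_simp
  show "checkStep C6" by code_simp
  show "(0,0) \<in> set C6" by code_simp
  show "list_all (pz (0,0)) C6" by code_simp
qed simp

lemma Phi_PE6: "Phi PE6 (\<subseteq>)"
  unfolding PE6_eq using Phi_iso[OF iso_check_iso[OF iso6] Phi_C6] .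

lemma C6_eq: "set C6 = set C6d" by code_simp
lemma rl7: "rlin pz C6d" by code_simp
lemma iso7: "iso_check (\<subseteq>) pz (ideals_list pz C6d) C7" by code_simp

lemma Phi_C7: "Phi (set C7) pz"
proof (rule Phi_check[where d=d7 and D=2 and m="(0,0)"])
  show "checkLoc C7 d7 2" by code_simp
  show "checkStep C7" by code_simp
  show "(0,0) \<in> set C7" by code_simp
  show "list_all (pz (0,0)) C7" by code_simp
qed simp

lemma Phi_PE7: "Phi PE7 (\<subseteq>)"
proof -
  have i1: "order_iso PE7 (\<subseteq>) (order_ideals (set C6) pz) (\<subseteq>) (image (lmap (ideals_list prod_le D4) C6))"
    unfolding PE7_def PE6_eq by (rule J_iso[OF iso_check_iso[OF iso6]])
  have e: "order_ideals (set C6) pz = set (ideals_list pz C6d)"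
    unfolding C6_eq using ideals_list_correct[OF rl7] .
  have "Phi (order_ideals (set C6) pz) (\<subseteq>)"
    unfolding e using Phi_iso[OF iso_check_iso[OF iso7] Phi_C7] .
  then show ?thesis using Phi_iso[OF i1] by blast
qed


lemma mc_Phi: "minuscule_connected C le \<Longrightarrow> Phi C le"
  unfolding minuscule_connected_def
proof (elim disjE exE conjE)
  fix a b assume "1 \<le> a" "1 \<le> b" "poset_isomorphic C le (chain_prod a b) prod_le"
  then show "Phi C le" using Phi_isomorphic Phi_chain_prod by blast
next
  fix b assume "1 \<le> b" "poset_isomorphic C le (young_interval b) young_le"
  then show "Phi C le" using Phi_isomorphic Phi_young by blast
next
  fix a assume "1 \<le> a" "poset_isomorphic C le (paa_carrier a) (paa_le a)"
  then show "Phi C le" using Phi_isomorphic Phi_paa by blast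
next
  assume "poset_isomorphic C le PE6 (\<subseteq>)"
  then show "Phi C le" using Phi_isomorphic Phi_PE6 by blast
next
  assume "poset_isomorphic C le PE7 (\<subseteq>)"
  then show "Phi C le" using Phi_isomorphic Phi_PE7 by blast
qed

theorem theorem6p2:
  fixes P :: "'a set" and le :: "'a \<Rightarrow> 'a \<Rightarrow> bool"
  assumes "finite P" and "is_poset P le"
    and "\<forall>C\<in>components P le. minuscule_connected C le"
  shows "tCDE P le"
  using Phi_tCDE[OF assms(1,2) Phi_components[OF assms(1)]] assms(3) mc_Phi by blast

end
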